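(* Let $\mathbf m,\mathbf n\in\Xi$ with $\mathbf m\ge\mathbf n$. The following are equivalent: (i) the inequality $\mathbf m\ge\mathbf n$ is anodyne; (ii) $|\mathbf m|=|\mathbf n|$, where $\mathbf m,\mathbf n$ are regarded as $W$-orbits (subsets) of $\mathcal C\times\mathcal C$; (iii) the map $\pi_{\mathbf m,\mathbf n}:\mathbf m\to\mathbf n$ is a bijection.
   Context: Let $\mathfrak h_\mathbb R$ be a finite-dimensional real Euclidean vector space, $W\subset O(\mathfrak h_\mathbb R)$ a finite reflection group, $\mathcal H$ its set of reflection hyperplanes, $\mathcal C$ the set of faces of $\mathcal H$ (relatively open cells cut out by $\mathcal H$), partially ordered by $A\le B$ iff $A\subset\overline B$. Fix a chamber $C^+$, $S$ the reflections in its walls, $W_I=\langle I\rangle$, $C^+_I$ the face of $\overline{C^+}$ open in $\bigcap_{s\in I}H_s$; $\bigsqcup_I W/W_I\cong\mathcal C$ via $wW_I\mapsto w(C^+_I)$, and $A_{\mathbf c}$ is the face of the coset $\mathbf c$. Let $\Xi=W\backslash(\mathcal C\times\mathcal C)$ with $\Xi(I,J)=W\backslash(W/W_I\times W/W_J)$, partially ordered by $\mathbf m\ge\mathbf n$ iff there are $(A,B)\in\mathbf m$, $(A',B')\in\mathbf n$ with $A\ge A'$, $B\ge B'$. If $\mathbf m\in\Xi(I_1,J_1)$, $\mathbf n\in\Xi(I_2,J_2)$ and $\mathbf m\ge\mathbf n$, then $I_1\subset I_2$, $J_1\subset J_2$ and the projection $W/W_{I_1}\times W/W_{J_1}\to W/W_{I_2}\times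 W/W_{J_2}$ restricts to a surjective $W$-map $\pi_{\mathbf m,\mathbf n}:\mathbf m\to\mathbf n$. Let $\mathfrak h=\mathfrak h_\mathbb R\oplus i\mathfrak h_\mathbb R$, $p:\mathfrak h\to W\backslash\mathfrak h$ the quotient, and $U_{\mathbf m}=p(iA_{\mathbf c}+A_{\mathbf d})$ for $\mathbf m=W(\mathbf c,\mathbf d)$. Let $\mathcal S^{(0)}$ be the stratification of $W\backslash\mathfrak h$ whose strata are the images under $p$ of the generic parts of complexified flats of $\mathcal H$ (for a flat $L$: points of $L\otimes\mathbb C$ not in any strictly smaller complexified flat). An inequality $\mathbf m\ge\mathbf n$ is called anodyne if $U_{\mathbf m}$ and $U_{\mathbf n}$ lie in the same stratum of $\mathcal S^{(0)}$. *)

theory Defs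
  imports "HOL-Analysis.Analysis"
begin

definition is_reflection_along :: "'a::euclidean_space \<Rightarrow> ('a \<Rightarrow> 'a) \<Rightarrow> bool" where
  "is_reflection_along v s \<longleftrightarrow> v \<noteq> 0 \<and> (\<forall>x. s x = x - (2 * (x \<bullet> v) / (v \<bullet> v)) *\<^sub>R v)"

definition is_reflection :: "('a::euclidean_space \<Rightarrow> 'a) \<Rightarrow> bool" where
  "is_reflection s \<longleftrightarrow> (\<exists>v. is_reflection_along v s)"

inductive_set gen_group :: "('a \<Rightarrow> 'a) set \<Rightarrow> ('a \<Rightarrow> 'a) set" for R where
  gen_id: "id \<in> gen_group R"
| gen_step: "s \<in> R \<Longrightarrow> g \<in> gen_group R \<Longrightarrow> s \<circ> g \<in> gen_group R"

definition finite_refl_group :: "('a::euclidean_space \<Rightarrow> 'a) set \<Rightarrow> bool" where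
  "finite_refl_group W \<longleftrightarrow> finite W \<and> W = gen_group {s \<in> W. is_reflection s}"

definition hyps :: "('a::euclidean_space \<Rightarrow> 'a) set \<Rightarrow> 'a set set" where
  "hyps W = {{x. x \<bullet> v = 0} | v. \<exists>s\<in>W. is_reflection_along v s}"

definition same_face :: "('a::euclidean_space \<Rightarrow> 'a) set \<Rightarrow> 'a \<Rightarrow> 'a \<Rightarrow> bool" where
  "same_face W x y \<longleftrightarrow> (\<forall>v. (\<exists>s\<in>W. is_reflection_along v s) \<longrightarrow> sgn (x \<bullet> v) = sgn (y \<bullet> v))"

definition faces :: "('a::euclidean_space \<Rightarrow> 'a) set \<Rightarrow> 'a set set" where
  "faces W = {{y. same_face W x y} | x. True}"

definition face_le :: "'a::euclidean_space set \<Rightarrow> 'a set \<Rightarrow> bool" where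
  "face_le A B \<longleftrightarrow> A \<subseteq> closure B"

definition pair_orbit :: "('a \<Rightarrow> 'a) set \<Rightarrow> 'a set \<times> 'a set \<Rightarrow> ('a set \<times> 'a set) set" where
  "pair_orbit W AB = (\<lambda>w. (w ` fst AB, w ` snd AB)) ` W"

definition Xi :: "('a::euclidean_space \<Rightarrow> 'a) set \<Rightarrow> ('a set \<times> 'a set) set set" where
  "Xi W = {pair_orbit W (A, B) | A B. A \<in> faces W \<and> B \<in> faces W}"

definition xi_ge :: "('a::euclidean_space \<Rightarrow> 'a) set \<Rightarrow> ('a set \<times> 'a set) set \<Rightarrow> ('a set \<times> 'a set) set \<Rightarrow> bool" where
  "xi_ge W m n \<longleftrightarrow> (\<exists>A B A' B'. (A, B) \<in> m \<and> (A', B') \<in> n \<and> face_le A' A \<and> face_le B' B)"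

text \<open>The projection pi_{m,n} : m \<rightarrow> n, sending (A,B) to the unique pair (A',B') in n
  with A' \<le> A and B' \<le> B (this is the map induced by W/W_I1 \<times> W/W_J1 \<rightarrow> W/W_I2 \<times> W/W_J2).\<close>
definition proj_xi :: "('a::euclidean_space set \<times> 'a set) set \<Rightarrow> 'a set \<times> 'a set \<Rightarrow> 'a set \<times> 'a set" where
  "proj_xi n AB = (THE q. q \<in> n \<and> face_le (fst q) (fst AB) \<and> face_le (snd q) (snd AB))"

text \<open>Complexification h = h_R + i h_R, represented as pairs (real part, imaginary part);
  W acts diagonally, and the quotient map p sends a point to its W-orbit.\<close>
definition quot :: "('a \<Rightarrow> 'a) set \<Rightarrow> 'a \<times> 'a \<Rightarrow> ('a \<times> 'a) set" where
  "quot W z = (\<lambda>w. (w (fst z), w (snd z))) ` W"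

text \<open>U_m = p(i A + B) for (A,B) a representative of m; i a + b = (b, a).\<close>
definition U_xi :: "('a \<Rightarrow> 'a) set \<Rightarrow> ('a set \<times> 'a set) set \<Rightarrow> ('a \<times> 'a) set set" where
  "U_xi W m = (let AB = (SOME q. q \<in> m) in quot W ` {(b, a) | a b. a \<in> fst AB \<and> b \<in> snd AB})"

text \<open>Flats: intersections of sets of reflection hyperplanes (the empty intersection is the
  whole space). Complexified flat of L is L \<times> L.\<close>
definition flats :: "('a::euclidean_space \<Rightarrow> 'a) set \<Rightarrow> 'a set set" where
  "flats W = {\<Inter> F | F. F \<subseteq> hyps W}"

definition generic_part :: "('a::euclidean_space \<Rightarrow> 'a) set \<Rightarrow> 'a set \<Rightarrow> ('a \<times> 'a) set" where
  "generic_part W L = {z \<in> L \<times> L. \<not> (\<exists>M\<in>flats W. M \<times> M \<subset> L \<times> L \<and> z \<in> M \<times> M)}"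

definition strata0 :: "('a::euclidean_space \<Rightarrow> 'a) set \<Rightarrow> ('a \<times> 'a) set set set" where
  "strata0 W = {quot W ` generic_part W L | L. L \<in> flats W}"

definition anodyne :: "('a::euclidean_space \<Rightarrow> 'a) set \<Rightarrow> ('a set \<times> 'a set) set \<Rightarrow> ('a set \<times> 'a set) set \<Rightarrow> bool" where
  "anodyne W m n \<longleftrightarrow> (\<exists>X\<in>strata0 W. U_xi W m \<subseteq> X \<and> U_xi W n \<subseteq> X)"

end

theory Submission
  imports Defs
begin


definition rf :: "'a::euclidean_space \<Rightarrow> 'a \<Rightarrow> 'a" where
  "rf v x = x - (2 * (x \<bullet> v) / (v \<bullet> v)) *\<^sub>R v"

lemma refl_along_eq: "is_reflection_along v s \<longleftrightarrow> v \<noteq> 0 \<and> s = rf v"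
  unfolding is_reflection_along_def rf_def by auto

lemma rf_rf: "v \<noteq> 0 \<Longrightarrow> rf v (rf v x) = x"
  unfolding rf_def by (simp add: inner_diff_left field_simps)

lemma rf_comp: "v \<noteq> 0 \<Longrightarrow> rf v \<circ> rf v = id"
  using rf_rf by fastforce

lemma linear_rf: "linear (rf v)"
  unfolding rf_def by (rule linearI) (simp_all add: inner_add_left algebra_simps add_divide_distrib)

lemma rf_inner: "v \<noteq> 0 \<Longrightarrow> rf v x \<bullet> rf v y = x \<bullet> y"
  unfolding rf_def by (simp add: inner_diff_left inner_diff_right field_simps inner_commute)

lemma rf_self: "rf v v = - v"
  unfolding rf_def by (cases "v = 0") (auto simp: algebra_simps scaleR_2)

lemma rf_fix: "x \<bullet> v = 0 \<Longrightarrow> rf v x = x"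
  unfolding rf_def by simp

lemma rf_scale: "k \<noteq> 0 \<Longrightarrow> rf (k *\<^sub>R v) = rf v"
  unfolding rf_def by (auto simp: fun_eq_iff field_simps)

lemma rf_par:
  assumes "u \<noteq> 0" "v \<noteq> 0" "rf u = rf v"
  shows "u = ((u \<bullet> v) / (v \<bullet> v)) *\<^sub>R v"
proof -
  have "rf v u = - u" using assms rf_self[of u] by metis
  hence "u - (2 * (u \<bullet> v) / (v \<bullet> v)) *\<^sub>R v = - u" unfolding rf_def .
  hence "2 *\<^sub>R u = (2 * (u \<bullet> v) / (v \<bullet> v)) *\<^sub>R v" by (simp add: algebra_simps scaleR_2)
  hence "(1/2) *\<^sub>R (2 *\<^sub>R u) = (1/2) *\<^sub>R ((2 * (u \<bullet> v) / (v \<bullet> v)) *\<^sub>R v)" by simp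
  thus ?thesis by simp
qed

lemma gen_id': "(\<lambda>x. x) \<in> gen_group R"
  using gen_group.gen_id unfolding id_def .

lemma gen_group_comp:
  assumes "g \<in> gen_group R" "h \<in> gen_group R" shows "g \<circ> h \<in> gen_group R"
  using assms(1)
proof induction
  case gen_id thus ?case using assms(2) by simp
next
  case (gen_step s g)
  have "(s \<circ> g) \<circ> h = s \<circ> (g \<circ> h)" by (simp add: comp_assoc)
  thus ?case using gen_step gen_group.gen_step by metis
qed

lemma gen_group_mono: "R \<subseteq> R' \<Longrightarrow> gen_group R \<subseteq> gen_group R'"
proof
  fix g assume "R \<subseteq> R'" "g \<in> gen_group R"
  from \<open>g \<in> gen_group R\<close> show "g \<in> gen_group R'"
  proof induction
    case gen_id show ?case by (rule gen_group.gen_id)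
  next
    case (gen_step s g) thus ?case using \<open>R \<subseteq> R'\<close> gen_group.gen_step by blast
  qed
qed

lemma gen_group_least:
  assumes "R \<subseteq> G" "id \<in> G" "\<And>a b. a \<in> G \<Longrightarrow> b \<in> G \<Longrightarrow> a \<circ> b \<in> G"
  shows "gen_group R \<subseteq> G"
proof
  fix g assume "g \<in> gen_group R" thus "g \<in> G" by induction (use assms in blast)+
qed

lemma gen_group_inv:
  assumes "\<And>s. s \<in> R \<Longrightarrow> s \<circ> s = id" "g \<in> gen_group R"
  shows "\<exists>h\<in>gen_group R. h \<circ> g = id \<and> g \<circ> h = id"
  using assms(2)
proof induction
  case gen_id show ?case by (rule bexI[of _ id]) (auto intro: gen_group.gen_id)
next
  case (gen_step s g)
  then obtain h where h: "h \<in> gen_group R" "h \<circ> g = id" "g \<circ> h = id" by blast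
  have "s \<circ> id \<in> gen_group R" using gen_step(1) gen_group.gen_step gen_group.gen_id by blast
  hence "s \<in> gen_group R" by simp
  hence "h \<circ> s \<in> gen_group R" using gen_group_comp h by blast
  moreover have "(h \<circ> s) \<circ> (s \<circ> g) = h \<circ> ((s \<circ> s) \<circ> g)" by (simp add: comp_assoc)
  hence "(h \<circ> s) \<circ> (s \<circ> g) = id" using assms(1)[OF gen_step(1)] h(2) by simp
  moreover have "(s \<circ> g) \<circ> (h \<circ> s) = s \<circ> (g \<circ> h) \<circ> s" by (simp add: comp_assoc)
  hence "(s \<circ> g) \<circ> (h \<circ> s) = id" using assms(1)[OF gen_step(1)] h(3) by simp
  ultimately show ?case by blast
qed

fun P :: "('b \<Rightarrow> 'b) list \<Rightarrow> 'b \<Rightarrow> 'b" where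
  "P [] = id" | "P (a # ws) = a \<circ> P ws"

lemma gen_group_words: "g \<in> gen_group R \<longleftrightarrow> (\<exists>ws. set ws \<subseteq> R \<and> g = P ws)"
proof
  assume "g \<in> gen_group R" thus "\<exists>ws. set ws \<subseteq> R \<and> g = P ws"
  proof induction
    case gen_id show ?case by (rule exI[of _ "[]"]) simp
  next
    case (gen_step s g) then obtain ws where "set ws \<subseteq> R" "g = P ws" by blast
    thus ?case using gen_step by (intro exI[of _ "s # ws"]) auto
  qed
next
  assume "\<exists>ws. set ws \<subseteq> R \<and> g = P ws"
  then obtain ws where "set ws \<subseteq> R" "g = P ws" by blast
  thus "g \<in> gen_group R"
  proof (induction ws arbitrary: g)
    case Nil thus ?case using gen_id' by simp
  next
    case (Cons a ws)
    have "P ws \<in> gen_group R" using Cons.IH Cons.prems by simp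
    moreover have "a \<in> R" using Cons.prems by simp
    ultimately have "a \<circ> P ws \<in> gen_group R" using gen_group.gen_step by blast
    thus ?case using Cons.prems(2) by (simp only: P.simps)
  qed
qed



locale frg =
  fixes W :: "('a::euclidean_space \<Rightarrow> 'a) set"
  assumes frg: "finite_refl_group W"
begin

definition "Rfl = {s\<in>W. is_reflection s}"

lemma finW: "finite W" using frg unfolding finite_refl_group_def by blast
lemma W_gen: "W = gen_group Rfl" using frg unfolding finite_refl_group_def Rfl_def by blast
lemma Rfl_W: "Rfl \<subseteq> W" unfolding Rfl_def by blast
lemma finRfl: "finite Rfl" using finW Rfl_W finite_subset by blast

definition rv :: "('a \<Rightarrow> 'a) \<Rightarrow> 'a" where "rv s = (SOME v. is_reflection_along v s)"

lemma rv: assumes "s \<in> Rfl" shows "is_reflection_along (rv s) s"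
proof -
  have "\<exists>v. is_reflection_along v s" using assms unfolding Rfl_def is_reflection_def by blast
  thus ?thesis unfolding rv_def by (rule someI_ex)
qed

lemma rv_nz: "s \<in> Rfl \<Longrightarrow> rv s \<noteq> 0" using rv refl_along_eq by blast
lemma rv_rf: "s \<in> Rfl \<Longrightarrow> s = rf (rv s)" using rv refl_along_eq by blast

lemma Rfl_inv: "s \<in> Rfl \<Longrightarrow> s \<circ> s = id"
  using rv_rf rv_nz rf_comp by metis

lemma id_W: "id \<in> W" using W_gen gen_group.gen_id by blast

lemma W_comp: "g \<in> W \<Longrightarrow> h \<in> W \<Longrightarrow> g \<circ> h \<in> W"
  using W_gen gen_group_comp by blast

lemma W_lin_orth: "w \<in> W \<Longrightarrow> linear w \<and> (\<forall>x y. w x \<bullet> w y = x \<bullet> y)"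
proof -
  assume "w \<in> W" hence "w \<in> gen_group Rfl" using W_gen by blast
  thus ?thesis
  proof induction
    case gen_id thus ?case by (simp add: linear_id[unfolded id_def] id_def)
  next
    case (gen_step s g)
    have "linear s" "\<forall>x y. s x \<bullet> s y = x \<bullet> y"
      using rv_rf[OF gen_step(1)] rv_nz[OF gen_step(1)] linear_rf rf_inner by metis+
    have "linear (s \<circ> g)" using linear_compose[of g s] gen_step \<open>linear s\<close> by blast
    hence "linear (\<lambda>a. s (g a))" unfolding o_def .
    thus ?case using gen_step \<open>\<forall>x y. s x \<bullet> s y = x \<bullet> y\<close> by simp
  qed
qed

lemma W_lin: "w \<in> W \<Longrightarrow> linear w" using W_lin_orth by blast
lemma W_orth: "w \<in> W \<Longrightarrow> w x \<bullet> w y = x \<bullet> y" using W_lin_orth by blast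

lemma W_inv_ex: "w \<in> W \<Longrightarrow> \<exists>h\<in>W. h \<circ> w = id \<and> w \<circ> h = id"
  using gen_group_inv[of Rfl w] Rfl_inv W_gen by auto

lemma W_inv: assumes "w \<in> W"
  shows "inv w \<in> W" "inv w \<circ> w = id" "w \<circ> inv w = id" "\<And>x. inv w (w x) = x" "\<And>x. w (inv w x) = x"
    "bij w" "inv (inv w) = w"
proof -
  obtain h where h: "h \<in> W" "h \<circ> w = id" "w \<circ> h = id" using W_inv_ex assms by blast
  have e: "inv w = h" using inv_unique_comp h by metis
  show "inv w \<in> W" "inv w \<circ> w = id" "w \<circ> inv w = id" using e h by auto
  thus "\<And>x. inv w (w x) = x" "\<And>x. w (inv w x) = x" by (metis comp_apply id_apply)+
  show "bij w" using h o_bij by blast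
  thus "inv (inv w) = w" using inv_inv_eq by blast
qed

lemma W_adj: "w \<in> W \<Longrightarrow> w x \<bullet> y = x \<bullet> inv w y"
  using W_orth[of w x "inv w y"] W_inv(5) by metis

lemma W_inj: "w \<in> W \<Longrightarrow> w x = w y \<longleftrightarrow> x = y"
  using W_inv(4) by metis

definition cj :: "('a \<Rightarrow> 'a) \<Rightarrow> ('a \<Rightarrow> 'a) \<Rightarrow> 'a \<Rightarrow> 'a" where
  "cj w t = w \<circ> t \<circ> inv w"

lemma cj_rf: assumes "w \<in> W" "t \<in> Rfl"
  shows "cj w t = rf (w (rv t))" "w (rv t) \<noteq> 0"
proof -
  let ?v = "rv t"
  have v: "?v \<noteq> 0" "t = rf ?v" using assms rv_nz rv_rf by auto
  show "w ?v \<noteq> 0" using W_orth[OF assms(1), of ?v ?v] v by auto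
  show "cj w t = rf (w ?v)"
  proof
    fix x
    have "cj w t x = w (inv w x - (2 * (inv w x \<bullet> ?v) / (?v \<bullet> ?v)) *\<^sub>R ?v)"
      unfolding cj_def using v(2) by (metis comp_apply rf_def)
    also have "\<dots> = x - (2 * (inv w x \<bullet> ?v) / (?v \<bullet> ?v)) *\<^sub>R w ?v"
      using W_lin[OF assms(1)] W_inv(5)[OF assms(1)] by (simp add: linear_diff linear_scale)
    also have "inv w x \<bullet> ?v = x \<bullet> w ?v" using W_adj[OF assms(1), of ?v x] by (simp add: inner_commute)
    also have "?v \<bullet> ?v = w ?v \<bullet> w ?v" using W_orth[OF assms(1)] by simp
    finally show "cj w t x = rf (w ?v) x" unfolding rf_def .
  qed
qed

lemma cj_Rfl: assumes "w \<in> W" "t \<in> Rfl" shows "cj w t \<in> Rfl"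
proof -
  have "is_reflection_along (w (rv t)) (cj w t)" using cj_rf[OF assms] refl_along_eq by blast
  moreover have "cj w t \<in> W" unfolding cj_def using assms W_comp W_inv(1) Rfl_W by blast
  ultimately show ?thesis unfolding Rfl_def is_reflection_def by blast
qed

lemma cj_cj: assumes "w \<in> W" shows "cj (inv w) (cj w t) = t" "cj w (cj (inv w) t) = t"
  unfolding cj_def using W_inv[OF assms] by (auto simp: fun_eq_iff)

lemma cj_inj: "w \<in> W \<Longrightarrow> cj w t = cj w t' \<longleftrightarrow> t = t'"
  using cj_cj by metis

lemma root_par: assumes "s \<in> Rfl" "is_reflection_along u s"
  shows "\<exists>k. k \<noteq> 0 \<and> u = k *\<^sub>R rv s"
proof -
  have u: "u \<noteq> 0" "s = rf u" using assms(2) refl_along_eq by auto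
  have "u = ((u \<bullet> rv s) / (rv s \<bullet> rv s)) *\<^sub>R rv s"
    using rf_par[of u "rv s"] u rv_nz[OF assms(1)] rv_rf[OF assms(1)] by metis
  thus ?thesis using u(1) by (metis scale_zero_left)
qed

lemma root_Rfl: assumes "s \<in> W" "is_reflection_along u s" shows "s \<in> Rfl"
  using assms unfolding Rfl_def is_reflection_def by blast

definition sp :: "'a \<Rightarrow> ('a \<Rightarrow> 'a) \<Rightarrow> real" where "sp x t = x \<bullet> rv t"

lemma sp_cj: assumes "w \<in> W" "t \<in> Rfl"
  shows "\<exists>k. k \<noteq> 0 \<and> (\<forall>x. sp (w x) (cj w t) = k * sp x t)"
proof -
  have "is_reflection_along (w (rv t)) (cj w t)" using cj_rf[OF assms] refl_along_eq by blast
  then obtain k where k: "k \<noteq> 0" "w (rv t) = k *\<^sub>R rv (cj w t)"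
    using root_par cj_Rfl[OF assms] by blast
  have "rv (cj w t) = (1/k) *\<^sub>R w (rv t)" using k by simp
  hence "sp (w x) (cj w t) = (1/k) * sp x t" for x
    unfolding sp_def using W_orth[OF assms(1)] by simp
  thus ?thesis using k(1) by (intro exI[of _ "1/k"]) simp
qed

lemma sp_cj_prod: assumes "w \<in> W" "t \<in> Rfl"
  shows "\<exists>k>0. \<forall>x y. sp (w x) (cj w t) * sp (w y) (cj w t) = k * (sp x t * sp y t)"
proof -
  obtain k where "k \<noteq> 0" "\<forall>x. sp (w x) (cj w t) = k * sp x t" using sp_cj[OF assms] by blast
  moreover have "k * k > 0" using \<open>k \<noteq> 0\<close> not_real_square_gt_zero by blast
  ultimately show ?thesis by (intro exI[of _ "k*k"]) (auto simp: algebra_simps)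
qed

definition sep :: "'a \<Rightarrow> 'a \<Rightarrow> ('a \<Rightarrow> 'a) set" where
  "sep x y = {t \<in> Rfl. sp x t * sp y t < 0}"

definition gen :: "'a \<Rightarrow> bool" where "gen x \<longleftrightarrow> (\<forall>t\<in>Rfl. sp x t \<noteq> 0)"

definition Dc :: "'a \<Rightarrow> 'a set" where "Dc c = {x. \<forall>t\<in>Rfl. sp x t * sp c t \<ge> 0}"

lemma sep_Rfl: "sep x y \<subseteq> Rfl" unfolding sep_def by blast
lemma fin_sep: "finite (sep x y)" using finRfl sep_Rfl finite_subset by blast
lemma sep_sym: "sep x y = sep y x" unfolding sep_def by (auto simp: mult.commute)
lemma sep_self: "sep x x = {}" unfolding sep_def by (auto simp: not_less)

lemma Rfl_cj_surj: assumes "w \<in> W" "t \<in> Rfl" shows "t = cj w (cj (inv w) t)" "cj (inv w) t \<in> Rfl"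
  using cj_cj[OF assms(1)] cj_Rfl[OF W_inv(1)[OF assms(1)] assms(2)] by auto

lemma sep_cj: assumes "w \<in> W" shows "sep (w x) (w y) = cj w ` sep x y"
proof
  show "cj w ` sep x y \<subseteq> sep (w x) (w y)"
  proof
    fix t' assume "t' \<in> cj w ` sep x y"
    then obtain t where t: "t \<in> Rfl" "sp x t * sp y t < 0" "t' = cj w t" unfolding sep_def by blast
    obtain k where "k > 0" "sp (w x) (cj w t) * sp (w y) (cj w t) = k * (sp x t * sp y t)"
      using sp_cj_prod[OF assms t(1)] by blast
    thus "t' \<in> sep (w x) (w y)" unfolding sep_def using t cj_Rfl[OF assms t(1)]
      by (simp add: mult_pos_neg)
  qed
next
  show "sep (w x) (w y) \<subseteq> cj w ` sep x y"
  proof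
    fix t' assume t': "t' \<in> sep (w x) (w y)"
    let ?t = "cj (inv w) t'"
    have tt: "t' = cj w ?t" "?t \<in> Rfl" using Rfl_cj_surj[OF assms] t' unfolding sep_def by auto
    obtain k where "k > 0" "sp (w x) (cj w ?t) * sp (w y) (cj w ?t) = k * (sp x ?t * sp y ?t)"
      using sp_cj_prod[OF assms tt(2)] by blast
    moreover have "sp (w x) (cj w ?t) * sp (w y) (cj w ?t) < 0" using t' tt(1) unfolding sep_def by simp
    ultimately have "k * (sp x ?t * sp y ?t) < 0" by simp
    hence "sp x ?t * sp y ?t < 0" using \<open>k > 0\<close> by (simp add: mult_less_0_iff)
    thus "t' \<in> cj w ` sep x y" using tt unfolding sep_def by blast
  qed
qed

lemma gen_W: assumes "w \<in> W" "gen x" shows "gen (w x)"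
  unfolding gen_def
proof
  fix t assume t: "t \<in> Rfl"
  let ?t = "cj (inv w) t"
  have tt: "t = cj w ?t" "?t \<in> Rfl" using Rfl_cj_surj[OF assms(1) t] by auto
  obtain k where "k \<noteq> 0" "\<forall>x. sp (w x) (cj w ?t) = k * sp x ?t" using sp_cj[OF assms(1) tt(2)] by blast
  thus "sp (w x) t \<noteq> 0" using assms(2) tt unfolding gen_def by (metis mult_eq_0_iff)
qed

lemma Dc_W: assumes "w \<in> W" "x \<in> Dc c" shows "w x \<in> Dc (w c)"
  unfolding Dc_def
proof (safe)
  fix t assume t: "t \<in> Rfl"
  let ?t = "cj (inv w) t"
  have tt: "t = cj w ?t" "?t \<in> Rfl" using Rfl_cj_surj[OF assms(1) t] by auto
  obtain k where "k > 0" "sp (w x) (cj w ?t) * sp (w c) (cj w ?t) = k * (sp x ?t * sp c ?t)"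
    using sp_cj_prod[OF assms(1) tt(2)] by blast
  thus "0 \<le> sp (w x) t * sp (w c) t" using assms(2) tt unfolding Dc_def by simp
qed

lemma sep_delta: assumes "gen x" "gen y" "gen z"
  shows "t \<in> sep x z \<longleftrightarrow> (t \<in> Rfl \<and> (t \<in> sep x y \<longleftrightarrow> t \<notin> sep y z))"
proof (cases "t \<in> Rfl")
  case True
  hence "sp x t \<noteq> 0" "sp y t \<noteq> 0" "sp z t \<noteq> 0" using assms unfolding gen_def by auto
  thus ?thesis unfolding sep_def using True
    by (auto simp: mult_less_0_iff)
next
  case False thus ?thesis unfolding sep_def by auto
qed

lemma sep_delta2: assumes "gen x" "gen y" "gen z"
  shows "sep x z = (sep x y - sep y z) \<union> (sep y z - sep x y)"
  using sep_delta[OF assms] sep_Rfl by blast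

end


lemma small_eps:
  assumes "finite T" "\<forall>x\<in>T. M x > (0::real)"
  shows "\<exists>\<epsilon>>0. \<forall>\<delta>. 0 \<le> \<delta> \<and> \<delta> \<le> \<epsilon> \<longrightarrow> (\<forall>x\<in>T. \<delta> * \<bar>K x\<bar> < M x)"
  using assms
proof (induction T rule: finite_induct)
  case empty show ?case by (rule exI[of _ 1]) simp
next
  case (insert a T)
  then obtain \<epsilon> where e: "\<epsilon> > 0" "\<forall>\<delta>. 0 \<le> \<delta> \<and> \<delta> \<le> \<epsilon> \<longrightarrow> (\<forall>x\<in>T. \<delta> * \<bar>K x\<bar> < M x)" by auto
  have Ma: "M a > 0" using insert by auto
  let ?e = "min \<epsilon> (M a / (\<bar>K a\<bar> + 1))"
  have "?e > 0" using e Ma by simp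
  moreover have "\<delta> * \<bar>K a\<bar> < M a" if "0 \<le> \<delta>" "\<delta> \<le> ?e" for \<delta>
  proof -
    have "\<delta> * \<bar>K a\<bar> \<le> (M a / (\<bar>K a\<bar> + 1)) * \<bar>K a\<bar>" using that by (intro mult_right_mono) auto
    also have "\<dots> < M a" using Ma by (simp add: field_simps)
    finally show ?thesis .
  qed
  ultimately show ?case using e by (intro exI[of _ ?e]) auto
qed

lemma avoid_finite: assumes "finite (B::real set)" "e > 0" shows "\<exists>t. 0 < t \<and> t < e \<and> t \<notin> B"
proof -
  have "infinite ({0<..<e} - B)" using assms Diff_infinite_finite infinite_Ioo by blast
  then obtain t where "t \<in> {0<..<e} - B" by (metis ex_in_conv finite.emptyI)
  thus ?thesis by auto
qed

lemma exists_avoid: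
  fixes u :: "'c \<Rightarrow> 'a::real_inner"
  assumes "subspace S" "finite T" "\<forall>t\<in>T. \<exists>z\<in>S. z \<bullet> u t \<noteq> 0"
  shows "\<exists>y\<in>S. \<forall>t\<in>T. y \<bullet> u t \<noteq> 0"
  using assms(2,3)
proof (induction T rule: finite_induct)
  case empty thus ?case using subspace_0[OF assms(1)] by blast
next
  case (insert t0 T)
  then obtain y where y: "y \<in> S" "\<forall>t\<in>T. y \<bullet> u t \<noteq> 0" by auto
  obtain z where z: "z \<in> S" "z \<bullet> u t0 \<noteq> 0" using insert by auto
  let ?B = "(\<lambda>t. - (y \<bullet> u t) / (z \<bullet> u t)) ` insert t0 T"
  have "finite ?B" using insert by simp
  then obtain l where l: "l \<notin> ?B" using avoid_finite[of ?B 1] by auto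
  have "y + l *\<^sub>R z \<in> S" using y z assms(1) by (simp add: subspace_add subspace_scale)
  moreover have "(y + l *\<^sub>R z) \<bullet> u t \<noteq> 0" if t: "t \<in> insert t0 T" for t
  proof (cases "z \<bullet> u t = 0")
    case True
    hence "t \<in> T" using z t by auto
    thus ?thesis using True y by (simp add: inner_add_left)
  next
    case False
    show ?thesis
    proof
      assume "(y + l *\<^sub>R z) \<bullet> u t = 0"
      hence "y \<bullet> u t + l * (z \<bullet> u t) = 0" by (simp add: inner_add_left)
      hence "l = - (y \<bullet> u t) / (z \<bullet> u t)" using False by (simp add: field_simps)
      thus False using l t by blast
    qed
  qed
  ultimately show ?case by blast
qed

lemma sign_lemma: "\<bar>b\<bar> < \<bar>a\<bar> \<Longrightarrow> (a + b) * a > (0::real)"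
  by (smt (verit) mult_pos_pos mult_neg_neg)

lemma pos_trans: "x * y > (0::real) \<Longrightarrow> y * z > 0 \<Longrightarrow> x * z > 0"
  by (smt (verit) mult_pos_pos mult_neg_neg zero_less_mult_iff)

context frg
begin

lemma W_Rfl: "t \<in> Rfl \<Longrightarrow> t \<in> W" using Rfl_W by blast

lemma Rfl_apply: assumes "t \<in> Rfl" shows "t x = x - (2 * (x \<bullet> rv t) / (rv t \<bullet> rv t)) *\<^sub>R rv t"
  using rv_rf[OF assms] by (metis rf_def)

lemma Rfl_fix: "t \<in> Rfl \<Longrightarrow> sp q t = 0 \<Longrightarrow> t q = q"
  unfolding sp_def using Rfl_apply[of t q] by simp

lemma Rfl_lin: "t \<in> Rfl \<Longrightarrow> linear t" using W_lin W_Rfl by blast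

lemma nonpar: assumes "t \<in> Rfl" "t' \<in> Rfl" "t \<noteq> t'"
  shows "\<exists>z. z \<bullet> rv t = 0 \<and> z \<bullet> rv t' \<noteq> 0"
proof -
  let ?v = "rv t" let ?v' = "rv t'"
  have v: "?v \<noteq> 0" "?v' \<noteq> 0" using assms rv_nz by auto
  let ?c = "(?v' \<bullet> ?v) / (?v \<bullet> ?v)"
  let ?z = "?v' - ?c *\<^sub>R ?v"
  have z1: "?z \<bullet> ?v = 0" using v by (simp add: inner_diff_left)
  have z2: "?z \<bullet> ?v' = ?z \<bullet> ?z"
  proof -
    have "?z \<bullet> ?z = ?z \<bullet> ?v' - ?c * (?z \<bullet> ?v)" by (simp add: inner_diff_right inner_commute)
    thus ?thesis using z1 by simp
  qed
  have "?z \<noteq> 0"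
  proof
    assume "?z = 0"
    hence e: "?v' = ?c *\<^sub>R ?v" by simp
    hence "?c \<noteq> 0" using v by auto
    hence "rf ?v' = rf ?v" using e rf_scale by metis
    thus False using rv_rf assms by metis
  qed
  hence "?z \<bullet> ?v' \<noteq> 0" using z2 by simp
  thus ?thesis using z1 by blast
qed

lemma dense_gen: assumes "e > 0" shows "\<exists>c. gen c \<and> norm (c - a) < e"
proof -
  have "\<forall>t\<in>Rfl. \<exists>z\<in>UNIV. z \<bullet> rv t \<noteq> 0" using rv_nz by (metis UNIV_I inner_eq_zero_iff)
  then obtain d where d: "\<forall>t\<in>Rfl. d \<bullet> rv t \<noteq> 0" using exists_avoid[OF subspace_UNIV finRfl] by blast
  let ?B = "(\<lambda>t. - (a \<bullet> rv t) / (d \<bullet> rv t)) ` Rfl"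
  have nd: "norm d + 1 > 0" by (simp add: add_nonneg_pos)
  hence "e / (norm d + 1) > 0" using assms by simp
  then obtain l where l: "0 < l" "l < e / (norm d + 1)" "l \<notin> ?B"
    using avoid_finite[of ?B] finRfl by blast
  let ?c = "a + l *\<^sub>R d"
  have "gen ?c" unfolding gen_def sp_def
  proof
    fix t assume t: "t \<in> Rfl"
    show "?c \<bullet> rv t \<noteq> 0"
    proof
      assume "?c \<bullet> rv t = 0"
      hence "a \<bullet> rv t + l * (d \<bullet> rv t) = 0" by (simp add: inner_add_left)
      hence "l = - (a \<bullet> rv t) / (d \<bullet> rv t)" using d t by (simp add: field_simps)
      thus False using l t by blast
    qed
  qed
  moreover have "norm (?c - a) < e"
  proof -
    have "norm (?c - a) = l * norm d" using l by simp
    also have "\<dots> \<le> l * (norm d + 1)" using l by simp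
    also have "\<dots> < e" using l(2) nd by (simp add: less_divide_eq mult.commute)
    finally show ?thesis .
  qed
  ultimately show ?thesis by blast
qed

lemma chamber_near: "\<exists>c. gen c \<and> (\<forall>t\<in>Rfl. sp a t \<noteq> 0 \<longrightarrow> sp a t * sp c t > 0)"
proof -
  let ?T = "{t\<in>Rfl. sp a t \<noteq> 0}"
  have "finite ?T" using finRfl by simp
  then obtain \<epsilon> where e: "\<epsilon> > 0" "\<forall>\<delta>. 0 \<le> \<delta> \<and> \<delta> \<le> \<epsilon> \<longrightarrow> (\<forall>t\<in>?T. \<delta> * \<bar>norm (rv t)\<bar> < \<bar>sp a t\<bar>)"
    using small_eps[of ?T "\<lambda>t. \<bar>sp a t\<bar>" "\<lambda>t. norm (rv t)"] by auto
  obtain c where c: "gen c" "norm (c - a) < \<epsilon>" using dense_gen e(1) by blast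
  have "sp a t * sp c t > 0" if t: "t \<in> ?T" for t
  proof -
    have "\<bar>sp c t - sp a t\<bar> = \<bar>(c - a) \<bullet> rv t\<bar>" unfolding sp_def by (simp add: inner_diff_left)
    also have "\<dots> \<le> norm (c - a) * norm (rv t)" by (rule Cauchy_Schwarz_ineq2)
    also have "\<dots> < \<bar>sp a t\<bar>" using e(2)[rule_format, of "norm (c - a)"] c t by auto
    finally have "\<bar>sp c t - sp a t\<bar> < \<bar>sp a t\<bar>" .
    hence "(sp a t + (sp c t - sp a t)) * sp a t > 0" by (rule sign_lemma)
    thus ?thesis by (simp add: mult.commute)
  qed
  thus ?thesis using c by blast
qed

lemma adj:
  assumes "gen e" "t \<in> Rfl" "sp q t = 0" "\<forall>t'\<in>Rfl - {t}. sp q t' * sp e t' > 0"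
  shows "sep e (t e) = {t}"
proof -
  let ?v = "rv t"
  define \<sigma> where "\<sigma> = sp e t"
  have s0: "\<sigma> \<noteq> 0" using assms(1,2) unfolding gen_def \<sigma>_def by auto
  have v0: "?v \<noteq> 0" using rv_nz assms(2) by auto
  have fin: "finite (Rfl - {t})" using finRfl by simp
  have pos: "\<forall>t'\<in>Rfl - {t}. \<bar>sp q t'\<bar> > 0"
  proof
    fix t' assume "t' \<in> Rfl - {t}"
    hence "sp q t' * sp e t' > 0" using assms(4) by blast
    thus "\<bar>sp q t'\<bar> > 0" by (cases "sp q t' = 0") auto
  qed
  obtain \<epsilon> where e: "\<epsilon> > 0" "\<forall>t'\<in>Rfl - {t}. \<epsilon> * \<bar>\<sigma> * (?v \<bullet> rv t')\<bar> < \<bar>sp q t'\<bar>"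
    using small_eps[OF fin pos, of "\<lambda>t'. \<sigma> * (?v \<bullet> rv t')"] by (meson order.refl less_imp_le)
  define e1 where "e1 = q + (\<epsilon> * \<sigma>) *\<^sub>R ?v"
  define e2 where "e2 = q - (\<epsilon> * \<sigma>) *\<^sub>R ?v"
  have te1: "t e1 = e2"
  proof -
    have "linear t" using Rfl_lin assms(2) by blast
    hence "t e1 = t q + (\<epsilon> * \<sigma>) *\<^sub>R t ?v" unfolding e1_def by (simp add: linear_add linear_scale)
    moreover have "t q = q" using Rfl_fix assms by blast
    moreover have "t ?v = - ?v" using rv_rf[OF assms(2)] rf_self by metis
    ultimately show ?thesis unfolding e2_def by simp
  qed
  have vv: "?v \<bullet> ?v > 0" using v0 by simp
  have sp1: "sp e1 t = \<epsilon> * \<sigma> * (?v \<bullet> ?v)" "sp e2 t = - (\<epsilon> * \<sigma> * (?v \<bullet> ?v))"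
    unfolding e1_def e2_def sp_def using assms(3) unfolding sp_def by (simp_all add: inner_add_left inner_diff_left)
  have sp2: "sp e1 t' * sp q t' > 0" "sp e2 t' * sp q t' > 0" if t': "t' \<in> Rfl - {t}" for t'
  proof -
    have b: "\<bar>\<epsilon> * \<sigma> * (?v \<bullet> rv t')\<bar> < \<bar>sp q t'\<bar>" using e(2) t' e(1) by (simp add: abs_mult mult.assoc)
    have "sp e1 t' = sp q t' + \<epsilon> * \<sigma> * (?v \<bullet> rv t')" unfolding e1_def sp_def by (simp add: inner_add_left)
    thus "sp e1 t' * sp q t' > 0" using sign_lemma[OF b] by simp
    have b2: "\<bar>- (\<epsilon> * \<sigma> * (?v \<bullet> rv t'))\<bar> < \<bar>sp q t'\<bar>" using b by simp
    have "sp e2 t' = sp q t' + - (\<epsilon> * \<sigma> * (?v \<bullet> rv t'))" unfolding e2_def sp_def by (simp add: inner_diff_left)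
    thus "sp e2 t' * sp q t' > 0" using sign_lemma[OF b2] by simp
  qed
  have p1: "\<epsilon> * \<sigma> * (?v \<bullet> ?v) * \<sigma> > 0"
  proof -
    have "\<epsilon> * \<sigma> * (?v \<bullet> ?v) * \<sigma> = \<epsilon> * (?v \<bullet> ?v) * (\<sigma> * \<sigma>)" by (simp add: algebra_simps)
    moreover have "\<sigma> * \<sigma> > 0" using s0 not_real_square_gt_zero by blast
    moreover have "\<epsilon> * (?v \<bullet> ?v) * (\<sigma> * \<sigma>) > 0" using e(1) vv \<open>\<sigma> * \<sigma> > 0\<close> by simp
    ultimately show ?thesis by linarith
  qed
  have g1: "gen e1" "gen e2" unfolding gen_def
  proof -
    show "\<forall>t'\<in>Rfl. sp e1 t' \<noteq> 0"
    proof
      fix t' assume "t' \<in> Rfl"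
      thus "sp e1 t' \<noteq> 0" using sp1 sp2[of t'] p1 by (cases "t' = t") auto
    qed
    show "\<forall>t'\<in>Rfl. sp e2 t' \<noteq> 0"
    proof
      fix t' assume "t' \<in> Rfl"
      thus "sp e2 t' \<noteq> 0" using sp1 sp2[of t'] p1 by (cases "t' = t") auto
    qed
  qed
  have sepee1: "sep e e1 = {}"
  proof -
    have "\<not> sp e t' * sp e1 t' < 0" if t': "t' \<in> Rfl" for t'
    proof (cases "t' = t")
      case True thus ?thesis using sp1 p1 unfolding \<sigma>_def by (simp add: mult.commute)
    next
      case False
      hence "sp e1 t' * sp q t' > 0" "sp q t' * sp e t' > 0" using sp2 assms(4) t' by auto
      hence "sp e1 t' * sp e t' > 0" by (rule pos_trans)
      thus ?thesis by (simp add: mult.commute)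
    qed
    thus ?thesis unfolding sep_def by auto
  qed
  have sepe12: "sep e1 e2 = {t}"
  proof -
    have "sp e1 t' * sp e2 t' < 0 \<longleftrightarrow> t' = t" if t': "t' \<in> Rfl" for t'
    proof (cases "t' = t")
      case True
      have "\<epsilon> * \<sigma> * (?v \<bullet> ?v) \<noteq> 0" using p1 by auto
      hence "(\<epsilon> * \<sigma> * (?v \<bullet> ?v)) * (\<epsilon> * \<sigma> * (?v \<bullet> ?v)) > 0" using not_real_square_gt_zero by blast
      thus ?thesis using True sp1 by simp
    next
      case False
      hence "sp e1 t' * sp q t' > 0" "sp e2 t' * sp q t' > 0" using sp2 t' by auto
      hence "sp e1 t' * sp e2 t' > 0" using pos_trans[of "sp e1 t'" "sp q t'" "sp e2 t'"] by (simp add: mult.commute)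
      thus ?thesis using False by simp
    qed
    thus ?thesis unfolding sep_def using assms(2) by auto
  qed
  have tW: "t \<in> W" using W_Rfl assms(2) by blast
  have gte: "gen (t e)" using gen_W tW assms(1) by blast
  have sep2: "sep e2 (t e) = {}"
    using sep_cj[OF tW, of e1 e] te1 sepee1 sep_sym by auto
  have "sep e1 (t e) = {t}" using sep_delta2[OF g1 gte] sepe12 sep2 by simp
  thus ?thesis using sep_delta2[OF assms(1) g1(1) gte] sepee1 by simp
qed

lemma wall_exists: assumes "t \<in> Rfl" shows "\<exists>e. gen e \<and> sep e (t e) = {t}"
proof -
  let ?v = "rv t"
  let ?S = "{x. x \<bullet> ?v = 0}"
  have sS: "subspace ?S" using subspace_hyperplane[of ?v] by (simp add: inner_commute)
  have "\<forall>t'\<in>Rfl - {t}. \<exists>z\<in>?S. z \<bullet> rv t' \<noteq> 0" using nonpar assms by blast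
  then obtain q where q: "q \<bullet> ?v = 0" "\<forall>t'\<in>Rfl - {t}. q \<bullet> rv t' \<noteq> 0"
    using exists_avoid[OF sS, of "Rfl - {t}" rv] finRfl by auto
  have fin: "finite (Rfl - {t})" using finRfl by simp
  have pos: "\<forall>t'\<in>Rfl - {t}. \<bar>sp q t'\<bar> > 0" using q(2) unfolding sp_def by auto
  obtain \<epsilon> where e: "\<epsilon> > 0" "\<forall>t'\<in>Rfl - {t}. \<epsilon> * \<bar>?v \<bullet> rv t'\<bar> < \<bar>sp q t'\<bar>"
    using small_eps[OF fin pos, of "\<lambda>t'. ?v \<bullet> rv t'"] by (meson order.refl less_imp_le)
  define e where "e = q + \<epsilon> *\<^sub>R ?v"
  have v0: "?v \<noteq> 0" using rv_nz assms by auto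
  have s1: "sp e t = \<epsilon> * (?v \<bullet> ?v)" unfolding e_def sp_def using q(1) by (simp add: inner_add_left)
  have s2: "sp q t' * sp e t' > 0" if t': "t' \<in> Rfl - {t}" for t'
  proof -
    have b: "\<bar>\<epsilon> * (?v \<bullet> rv t')\<bar> < \<bar>sp q t'\<bar>" using e t' by (simp add: abs_mult)
    have "sp e t' = sp q t' + \<epsilon> * (?v \<bullet> rv t')" unfolding e_def sp_def by (simp add: inner_add_left)
    thus ?thesis using sign_lemma[OF b] by (simp add: mult.commute)
  qed
  have "gen e" unfolding gen_def
  proof
    fix t' assume t': "t' \<in> Rfl"
    show "sp e t' \<noteq> 0"
    proof (cases "t' = t")
      case True thus ?thesis using s1 e(1) v0 by simp
    next
      case False thus ?thesis using s2[of t'] t' by auto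
    qed
  qed
  moreover have "sp q t = 0" using q(1) unfolding sp_def .
  moreover have "\<forall>t'\<in>Rfl - {t}. sp q t' * sp e t' > 0" using s2 by blast
  ultimately show ?thesis using adj[of e t q] assms by blast
qed

end


lemma prod_zero_lemma: "(a::real) * b \<ge> 0 \<Longrightarrow> a * c \<ge> 0 \<Longrightarrow> b * c < 0 \<Longrightarrow> a = 0"
proof (rule ccontr)
  assume h: "a * b \<ge> 0" "a * c \<ge> 0" "b * c < 0" "a \<noteq> 0"
  show False
  proof (cases "a > 0")
    case True
    hence "b \<ge> 0" "c \<ge> 0" using h by (auto simp: zero_le_mult_iff)
    thus False using h(3) mult_nonneg_nonneg[of b c] by linarith
  next
    case False
    hence "a < 0" using h(4) by simp
    hence "b \<le> 0" "c \<le> 0" using h by (auto simp: zero_le_mult_iff)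
    thus False using h(3) mult_nonpos_nonpos[of b c] by linarith
  qed
qed

context frg
begin

lemma WL:
  assumes gc: "gen c" and ge: "gen e" and ne: "sep c e \<noteq> {}"
  shows "\<exists>t\<in>sep c e. sep e (t e) = {t}"
proof -
  define Cone where "Cone F = {x. \<forall>t\<in>F. sp x t * sp e t > 0}" for F
  define Pr where "Pr F \<longleftrightarrow> F \<subseteq> Rfl \<and> Cone F = Cone Rfl" for F
  have "Pr Rfl" by (simp add: Pr_def)
  then obtain F where F: "Pr F" "\<And>F'. Pr F' \<Longrightarrow> card F \<le> card F'"
    using ex_has_least_nat[of Pr Rfl card] by blast
  have FR: "F \<subseteq> Rfl" and FC: "Cone F = Cone Rfl" using F(1) unfolding Pr_def by auto
  have finF: "finite F" using FR finRfl finite_subset by blast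
  obtain t0 where t0: "t0 \<in> sep c e" using ne by blast
  have "c \<notin> Cone Rfl" using t0 unfolding Cone_def sep_def by force
  hence "c \<notin> Cone F" using FC by simp
  then obtain t where t: "t \<in> F" "\<not> sp c t * sp e t > 0" unfolding Cone_def by blast
  have tR: "t \<in> Rfl" using t FR by blast
  have "sp c t \<noteq> 0" "sp e t \<noteq> 0" using gc ge tR unfolding gen_def by auto
  hence "sp c t * sp e t \<noteq> 0" by simp
  hence "sp c t * sp e t < 0" using t(2) by linarith
  hence tsep: "t \<in> sep c e" unfolding sep_def using tR by blast
  define \<alpha> where "\<alpha> = sp e t"
  have a0: "\<alpha> \<noteq> 0" using \<open>sp e t \<noteq> 0\<close> unfolding \<alpha>_def .
  have "card (F - {t}) < card F" using finF t(1) by (rule card_Diff1_less)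
  hence "\<not> Pr (F - {t})" using F(2) by fastforce
  moreover have "F - {t} \<subseteq> Rfl" using FR by blast
  ultimately have "Cone (F - {t}) \<noteq> Cone Rfl" unfolding Pr_def by blast
  moreover have "Cone Rfl \<subseteq> Cone (F - {t})" using FR unfolding Cone_def by blast
  ultimately obtain y where y: "y \<in> Cone (F - {t})" "y \<notin> Cone Rfl" by blast
  have "y \<notin> Cone F" using y FC by simp
  hence yt: "sp y t * \<alpha> \<le> 0" using y(1) unfolding Cone_def \<alpha>_def by force
  define \<beta> where "\<beta> = sp y t"
  have aa: "\<alpha> * \<alpha> > 0" using a0 not_real_square_gt_zero by blast
  have ab: "(\<alpha> - \<beta>) * \<alpha> > 0" using aa yt unfolding \<beta>_def by (simp add: algebra_simps)
  hence ab0: "\<alpha> - \<beta> \<noteq> 0" by auto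
  define l where "l = \<alpha> / (\<alpha> - \<beta>)"
  have l0: "l > 0"
  proof -
    have "l = (\<alpha> * \<alpha>) / ((\<alpha> - \<beta>) * \<alpha>)" unfolding l_def using a0 by simp
    thus ?thesis using aa ab by (simp only: divide_pos_pos)
  qed
  have l1: "1 - l \<ge> 0"
  proof -
    have "1 - l = (- (\<beta> * \<alpha>)) / ((\<alpha> - \<beta>) * \<alpha>)" unfolding l_def using a0 ab0 by (simp add: field_simps)
    moreover have "- (\<beta> * \<alpha>) \<ge> 0" using yt unfolding \<beta>_def by simp
    ultimately show ?thesis using ab by (simp only: divide_nonneg_pos)
  qed
  define q where "q = e + l *\<^sub>R (y - e)"
  have spq: "sp q t' = (1 - l) * sp e t' + l * sp y t'" for t'
    unfolding q_def sp_def by (simp add: inner_add_left inner_diff_left algebra_simps)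
  have qt: "sp q t = 0"
    using spq[of t] ab0 unfolding l_def \<alpha>_def[symmetric] \<beta>_def[symmetric] by (simp add: field_simps)
  have qF: "sp q t' * sp e t' > 0" if t': "t' \<in> F - {t}" for t'
  proof -
    have "sp y t' * sp e t' > 0" using y(1) t' unfolding Cone_def by blast
    moreover have "(1 - l) * (sp e t' * sp e t') \<ge> 0" using l1 by simp
    moreover have "sp q t' * sp e t' = (1 - l) * (sp e t' * sp e t') + l * (sp y t' * sp e t')"
      unfolding spq[of t'] by (simp add: algebra_simps)
    moreover have "l * (sp y t' * sp e t') > 0" using l0 calculation(1) by simp
    ultimately show ?thesis by linarith
  qed
  have qall: "\<forall>t''\<in>Rfl - {t}. sp q t'' * sp e t'' > 0"
  proof (rule ccontr)
    assume "\<not> ?thesis"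
    then obtain t'' where t'': "t'' \<in> Rfl" "t'' \<noteq> t" "\<not> sp q t'' * sp e t'' > 0" by blast
    obtain z where z: "z \<bullet> rv t'' = 0" "z \<bullet> rv t \<noteq> 0" using nonpar[OF t''(1) tR t''(2)] by blast
    define u where "u = (\<alpha> * (z \<bullet> rv t)) *\<^sub>R z"
    have ut: "sp u t * \<alpha> > 0"
    proof -
      have "sp u t * \<alpha> = (\<alpha> * \<alpha>) * ((z \<bullet> rv t) * (z \<bullet> rv t))" unfolding u_def sp_def by (simp add: algebra_simps)
      moreover have "(z \<bullet> rv t) * (z \<bullet> rv t) > 0" using z(2) not_real_square_gt_zero by blast
      ultimately show ?thesis using aa by (simp only: mult_pos_pos)
    qed
    have ut'': "sp u t'' = 0" unfolding u_def sp_def using z(1) by simp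
    have finFt: "finite (F - {t})" using finF by simp
    obtain \<epsilon> where e: "\<epsilon> > 0" "\<forall>t'\<in>F - {t}. \<epsilon> * \<bar>sp u t' * sp e t'\<bar> < sp q t' * sp e t'"
      using small_eps[OF finFt, of "\<lambda>t'. sp q t' * sp e t'" "\<lambda>t'. sp u t' * sp e t'"] qF
      by (meson order.refl less_imp_le)
    define p where "p = q + \<epsilon> *\<^sub>R u"
    have spp: "sp p t' = sp q t' + \<epsilon> * sp u t'" for t' unfolding p_def sp_def by (simp add: inner_add_left)
    have "p \<in> Cone F" unfolding Cone_def
    proof (safe)
      fix t' assume t': "t' \<in> F"
      show "sp p t' * sp e t' > 0"
      proof (cases "t' = t")
        case True
        have "sp p t' * sp e t' = \<epsilon> * (sp u t * \<alpha>)" using True spp qt unfolding \<alpha>_def by simp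
        thus ?thesis using e(1) ut by simp
      next
        case False
        hence t'F: "t' \<in> F - {t}" using t' by blast
        have "sp p t' * sp e t' = sp q t' * sp e t' + \<epsilon> * (sp u t' * sp e t')" using spp by (simp add: algebra_simps)
        moreover have "\<epsilon> * \<bar>sp u t' * sp e t'\<bar> < sp q t' * sp e t'" using e(2) t'F by blast
        moreover have "- (\<epsilon> * \<bar>sp u t' * sp e t'\<bar>) \<le> \<epsilon> * (sp u t' * sp e t')"
          using mult_left_mono[of "- \<bar>sp u t' * sp e t'\<bar>" "sp u t' * sp e t'" \<epsilon>] e(1) by simp
        ultimately show ?thesis by linarith
      qed
    qed
    hence "p \<in> Cone Rfl" using FC by simp
    hence "sp p t'' * sp e t'' > 0" using t''(1) unfolding Cone_def by blast
    moreover have "sp p t'' = sp q t''" using spp ut'' by simp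
    ultimately show False using t''(3) by simp
  qed
  have "sep e (t e) = {t}" using adj[OF ge tR qt qall] .
  thus ?thesis using tsep by blast
qed

definition Sc :: "'a \<Rightarrow> ('a \<Rightarrow> 'a) set" where "Sc c = {s\<in>Rfl. sep c (s c) = {s}}"

lemma Sc_Rfl: "Sc c \<subseteq> Rfl" unfolding Sc_def by blast

lemma genSc_W: "gen_group (Sc c) \<subseteq> W"
  using gen_group_mono[OF Sc_Rfl] W_gen by blast

lemma Rfl_invol: "t \<in> Rfl \<Longrightarrow> t (t x) = x" using Rfl_inv by (metis comp_apply id_apply)

lemma Rfl_inv_eq: "t \<in> Rfl \<Longrightarrow> inv t = t" using Rfl_inv inv_unique_comp by blast

lemma cj_Rfl_eq: "b \<in> Rfl \<Longrightarrow> cj b t = b \<circ> t \<circ> b" unfolding cj_def using Rfl_inv_eq by simp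

lemma wall_move:
  assumes "gen x" "gen y" "sep x y = {}" "t \<in> Rfl" "sep y (t y) = {t}"
  shows "sep x (t x) = {t}"
proof -
  have tW: "t \<in> W" using assms(4) W_Rfl by blast
  have g: "gen (t x)" "gen (t y)" using gen_W[OF tW] assms by auto
  have "sep (t y) (t x) = cj t ` sep y x" using sep_cj[OF tW] .
  hence s1: "sep (t y) (t x) = {}" using assms(3) sep_sym by simp
  have "sep y (t x) = {t}" using sep_delta2[OF assms(2) g(2) g(1)] assms(5) s1 by simp
  thus ?thesis using sep_delta2[OF assms(1) assms(2) g(1)] assms(3) by simp
qed

lemma conj_wall:
  assumes "w \<in> W" "t \<in> Rfl" "sep (w c) (t (w c)) = {t}"
  shows "cj (inv w) t \<in> Sc c"
proof -
  have iw: "inv w \<in> W" using W_inv assms(1) by blast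
  have s: "cj (inv w) t \<in> Rfl" using cj_Rfl[OF iw assms(2)] .
  have e: "cj (inv w) t c = inv w (t (w c))" unfolding cj_def using W_inv(7)[OF assms(1)] by simp
  have "sep c (cj (inv w) t c) = sep (inv w (w c)) (inv w (t (w c)))" using e W_inv(4)[OF assms(1)] by simp
  also have "\<dots> = cj (inv w) ` sep (w c) (t (w c))" using sep_cj[OF iw] .
  finally have "sep c (cj (inv w) t c) = {cj (inv w) t}" using assms(3) by simp
  thus ?thesis using s unfolding Sc_def by blast
qed

lemma gen_single: "s \<in> R \<Longrightarrow> s \<in> gen_group R"
  using gen_group.gen_step[OF _ gen_group.gen_id, of s R] by simp

lemma TR: assumes gc: "gen c" shows "gen e \<Longrightarrow> \<exists>w\<in>gen_group (Sc c). sep (w c) e = {}"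
proof (induction "card (sep c e)" arbitrary: e rule: less_induct)
  case less
  show ?case
  proof (cases "sep c e = {}")
    case True
    have "id \<in> gen_group (Sc c)" by (rule gen_group.gen_id)
    moreover have "sep (id c) e = {}" using True by simp
    ultimately show ?thesis by blast
  next
    case False
    then obtain t where t: "t \<in> sep c e" "sep e (t e) = {t}" using WL[OF gc less.prems] by blast
    have tR: "t \<in> Rfl" using t sep_Rfl by blast
    have tW: "t \<in> W" using tR W_Rfl by blast
    define e' where "e' = t e"
    have ge': "gen e'" unfolding e'_def using gen_W[OF tW less.prems] .
    have "sep c e' = (sep c e - sep e e') \<union> (sep e e' - sep c e)" using sep_delta2[OF gc less.prems ge'] .
    hence "sep c e' = sep c e - {t}" using t unfolding e'_def by auto
    hence "card (sep c e') < card (sep c e)" using t(1) fin_sep card_Diff1_less by metis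
    then obtain w' where w': "w' \<in> gen_group (Sc c)" "sep (w' c) e' = {}" using less.hyps ge' by blast
    have w'W: "w' \<in> W" using w' genSc_W by blast
    have gw'c: "gen (w' c)" using gen_W[OF w'W gc] .
    have ee': "e = t e'" unfolding e'_def using Rfl_invol[OF tR] by simp
    have "sep e' (t e') = {t}" using t(2) ee' sep_sym unfolding e'_def by simp
    hence wall: "sep (w' c) (t (w' c)) = {t}" using wall_move[OF gw'c ge' w'(2) tR] by blast
    define s where "s = cj (inv w') t"
    have sS: "s \<in> Sc c" unfolding s_def using conj_wall[OF w'W tR wall] .
    have "w' \<circ> s \<in> gen_group (Sc c)" using gen_group_comp[OF w'(1) gen_single[OF sS]] .
    moreover have "(w' \<circ> s) c = t (w' c)" unfolding s_def cj_def using W_inv[OF w'W] by simp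
    moreover have "sep (t (w' c)) e = {}"
    proof -
      have "sep (t (w' c)) (t e') = cj t ` sep (w' c) e'" using sep_cj[OF tW] .
      thus ?thesis using w'(2) ee' by simp
    qed
    ultimately show ?thesis by metis
  qed
qed

lemma Sc_invol: "s \<in> Sc c \<Longrightarrow> s \<circ> s = id" using Sc_Rfl Rfl_inv by blast

lemma GEN: assumes gc: "gen c" shows "W \<subseteq> gen_group (Sc c)"
proof -
  have "Rfl \<subseteq> gen_group (Sc c)"
  proof
    fix t assume tR: "t \<in> Rfl"
    obtain e where e: "gen e" "sep e (t e) = {t}" using wall_exists[OF tR] by blast
    obtain w' where w': "w' \<in> gen_group (Sc c)" "sep (w' c) e = {}" using TR[OF gc e(1)] by blast
    have w'W: "w' \<in> W" using w' genSc_W by blast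
    have gw'c: "gen (w' c)" using gen_W[OF w'W gc] .
    have wall: "sep (w' c) (t (w' c)) = {t}" using wall_move[OF gw'c e(1) w'(2) tR e(2)] .
    define s where "s = cj (inv w') t"
    have sS: "s \<in> Sc c" unfolding s_def using conj_wall[OF w'W tR wall] .
    obtain h where h: "h \<in> gen_group (Sc c)" "h \<circ> w' = id" "w' \<circ> h = id"
      using gen_group_inv[of "Sc c" w'] Sc_invol w'(1) by blast
    have hi: "inv w' = h" using inv_unique_comp[OF h(3) h(2)] .
    have "w' \<circ> s \<circ> h \<in> gen_group (Sc c)"
      using gen_group_comp[OF gen_group_comp[OF w'(1) gen_single[OF sS]] h(1)] .
    moreover have "w' \<circ> s \<circ> h = t"
    proof
      fix x show "(w' \<circ> s \<circ> h) x = t x"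
        unfolding s_def cj_def hi using W_inv[OF w'W] hi by simp
    qed
    ultimately show "t \<in> gen_group (Sc c)" by simp
  qed
  thus ?thesis using W_gen gen_group_least[of Rfl "gen_group (Sc c)"] gen_group.gen_id gen_group_comp
    by metis
qed

fun Tl :: "('a \<Rightarrow> 'a) list \<Rightarrow> ('a \<Rightarrow> 'a) list" where
  "Tl [] = []" | "Tl (a # ws) = a # map (cj a) (Tl ws)"

lemma P_W: "set ws \<subseteq> Rfl \<Longrightarrow> P ws \<in> W"
  using gen_group_words[of "P ws" Rfl] W_gen by blast

lemma Tl_Rfl: "set ws \<subseteq> Rfl \<Longrightarrow> set (Tl ws) \<subseteq> Rfl"
proof (induction ws)
  case (Cons a ws) thus ?case using cj_Rfl W_Rfl by auto
qed simp

lemma L1: assumes gc: "gen c" shows "set ws \<subseteq> Sc c \<Longrightarrow> distinct (Tl ws) \<Longrightarrow> sep c (P ws c) = set (Tl ws)"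
proof (induction ws)
  case Nil thus ?case using sep_self by simp
next
  case (Cons a ws)
  have aS: "a \<in> Sc c" and wsS: "set ws \<subseteq> Sc c" using Cons.prems by auto
  have aR: "a \<in> Rfl" using aS Sc_Rfl by blast
  have aW: "a \<in> W" using aR W_Rfl by blast
  have PW: "P ws \<in> W" using P_W wsS Sc_Rfl by blast
  have dist: "distinct (Tl ws)" "a \<notin> set (map (cj a) (Tl ws))" using Cons.prems(2) distinct_map by auto
  have IH: "sep c (P ws c) = set (Tl ws)" using Cons.IH wsS dist(1) by blast
  have g: "gen (a c)" "gen (a (P ws c))" using gen_W aW PW gc by auto
  have s1: "sep c (a c) = {a}" using aS unfolding Sc_def by blast
  have s2: "sep (a c) (a (P ws c)) = set (map (cj a) (Tl ws))" using sep_cj[OF aW] IH by simp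
  have "sep c (a (P ws c)) = (sep c (a c) - sep (a c) (a (P ws c))) \<union> (sep (a c) (a (P ws c)) - sep c (a c))"
    using sep_delta2[OF gc g] .
  also have "\<dots> = set (Tl (a # ws))" using s1 s2 dist(2) by auto
  finally show ?case by simp
qed

lemma L2: "set ws \<subseteq> Sc c \<Longrightarrow> a \<in> set (Tl ws) \<Longrightarrow>
    \<exists>vs. set vs \<subseteq> Sc c \<and> length vs < length ws \<and> P ws = a \<circ> P vs"
proof (induction ws arbitrary: a)
  case Nil thus ?case by simp
next
  case (Cons b ws)
  have bS: "b \<in> Sc c" and wsS: "set ws \<subseteq> Sc c" using Cons.prems by auto
  have bR: "b \<in> Rfl" using bS Sc_Rfl by blast
  show ?case
  proof (cases "a = b")
    case True thus ?thesis using wsS by (intro exI[of _ ws]) auto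
  next
    case False
    then obtain t0 where t0: "t0 \<in> set (Tl ws)" "a = cj b t0" using Cons.prems(2) by auto
    obtain vs where vs: "set vs \<subseteq> Sc c" "length vs < length ws" "P ws = t0 \<circ> P vs"
      using Cons.IH[OF wsS t0(1)] by blast
    have "P (b # ws) = a \<circ> P (b # vs)"
    proof
      fix x
      show "P (b # ws) x = (a \<circ> P (b # vs)) x"
        using t0(2) vs(3) cj_Rfl_eq[OF bR] Rfl_invol[OF bR] by simp
    qed
    thus ?thesis using vs bS by (intro exI[of _ "b # vs"]) auto
  qed
qed

lemma L3: "set ws \<subseteq> Sc c \<Longrightarrow> \<not> distinct (Tl ws) \<Longrightarrow>
    \<exists>vs. set vs \<subseteq> Sc c \<and> length vs < length ws \<and> P vs = P ws"
proof (induction ws)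
  case Nil thus ?case by simp
next
  case (Cons a ws)
  have aS: "a \<in> Sc c" and wsS: "set ws \<subseteq> Sc c" using Cons.prems by auto
  have aR: "a \<in> Rfl" using aS Sc_Rfl by blast
  have aW: "a \<in> W" using aR W_Rfl by blast
  have inj: "inj_on (cj a) (set (Tl ws))" using cj_inj[OF aW] by (auto simp: inj_on_def)
  have "a \<in> set (map (cj a) (Tl ws)) \<or> \<not> distinct (Tl ws)"
    using Cons.prems(2) distinct_map inj by auto
  thus ?case
  proof
    assume "a \<in> set (map (cj a) (Tl ws))"
    then obtain t0 where t0: "t0 \<in> set (Tl ws)" "a = cj a t0" by auto
    have "t0 = cj (inv a) a" using cj_cj(1)[OF aW, of t0] t0(2) by simp
    also have "\<dots> = a" using Rfl_inv_eq[OF aR] cj_Rfl_eq[OF aR] Rfl_inv[OF aR] by simp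
    finally have "a \<in> set (Tl ws)" using t0 by simp
    then obtain vs where vs: "set vs \<subseteq> Sc c" "length vs < length ws" "P ws = a \<circ> P vs"
      using L2[OF wsS] by blast
    have "P (a # ws) = P vs"
    proof
      fix x show "P (a # ws) x = P vs x" using vs(3) Rfl_invol[OF aR] by simp
    qed
    thus ?thesis using vs by (intro exI[of _ vs]) auto
  next
    assume "\<not> distinct (Tl ws)"
    then obtain vs where "set vs \<subseteq> Sc c" "length vs < length ws" "P vs = P ws" using Cons.IH wsS by blast
    thus ?thesis using aS by (intro exI[of _ "a # vs"]) auto
  qed
qed

lemma FREE: assumes gc: "gen c" "w \<in> W" "sep c (w c) = {}" shows "w = id"
proof -
  have "w \<in> gen_group (Sc c)" using GEN[OF gc(1)] assms(2) by blast
  then obtain ws0 where "set ws0 \<subseteq> Sc c" "w = P ws0" using gen_group_words by blast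
  then obtain ws where ws: "set ws \<subseteq> Sc c" "w = P ws"
    "\<And>vs. set vs \<subseteq> Sc c \<and> w = P vs \<Longrightarrow> length ws \<le> length vs"
    using ex_has_least_nat[of "\<lambda>ws. set ws \<subseteq> Sc c \<and> w = P ws" ws0 length] by blast
  show ?thesis
  proof (cases ws)
    case Nil thus ?thesis using ws by simp
  next
    case (Cons a ws')
    show ?thesis
    proof (cases "distinct (Tl ws)")
      case True
      hence "sep c (w c) = set (Tl ws)" using L1[OF gc(1) ws(1)] ws(2) by simp
      thus ?thesis using Cons assms(3) by simp
    next
      case False
      then obtain vs where "set vs \<subseteq> Sc c" "length vs < length ws" "P vs = P ws" using L3[OF ws(1)] by blast
      thus ?thesis using ws(2,3) by fastforce
    qed
  qed
qed

lemma FD: assumes gc: "gen c" shows "w \<in> W \<Longrightarrow> x \<in> Dc c \<Longrightarrow> w x \<in> Dc c \<Longrightarrow> w x = x"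
proof (induction "card (sep c (w c))" arbitrary: w rule: less_induct)
  case less
  show ?case
  proof (cases "sep c (w c) = {}")
    case True thus ?thesis using FREE[OF gc less.prems(1)] by simp
  next
    case False
    have gwc: "gen (w c)" using gen_W[OF less.prems(1) gc] .
    obtain t where t: "t \<in> sep c (w c)" "sep (w c) (t (w c)) = {t}" using WL[OF gc gwc False] by blast
    have tR: "t \<in> Rfl" using t sep_Rfl by blast
    have tW: "t \<in> W" using tR W_Rfl by blast
    have "w x \<in> Dc (w c)" using Dc_W[OF less.prems(1,2)] .
    hence h1: "sp (w x) t * sp (w c) t \<ge> 0" using tR unfolding Dc_def by blast
    have h2: "sp (w x) t * sp c t \<ge> 0" using less.prems(3) tR unfolding Dc_def by blast
    have h3: "sp c t * sp (w c) t < 0" using t(1) unfolding sep_def by blast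
    have "sp (w x) t = 0" using prod_zero_lemma[OF h2 h1 h3] .
    hence fix1: "t (w x) = w x" using Rfl_fix tR by blast
    define w' where "w' = t \<circ> w"
    have w'W: "w' \<in> W" unfolding w'_def using W_comp tW less.prems(1) by blast
    have gtwc: "gen (t (w c))" using gen_W[OF tW gwc] .
    have "sep c (w' c) = (sep c (w c) - sep (w c) (t (w c))) \<union> (sep (w c) (t (w c)) - sep c (w c))"
      unfolding w'_def using sep_delta2[OF gc gwc gtwc] by simp
    hence "sep c (w' c) = sep c (w c) - {t}" using t by auto
    hence "card (sep c (w' c)) < card (sep c (w c))" using t(1) fin_sep card_Diff1_less by metis
    moreover have "w' x \<in> Dc c" unfolding w'_def using fix1 less.prems(3) by simp
    ultimately have "w' x = x" using less.hyps w'W less.prems(2) by blast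
    thus ?thesis using fix1 unfolding w'_def by simp
  qed
qed

end


lemma sgn_mid: "sgn (a::real) = sgn b \<Longrightarrow> sgn ((1/2) * (a + b)) = sgn a"
  by (auto simp: sgn_if split: if_splits)

lemma sgn_pos_mult: "sgn (y::real) = sgn a \<Longrightarrow> a * c > 0 \<Longrightarrow> y * c > 0"
  by (auto simp: sgn_if zero_less_mult_iff split: if_splits)

lemma sgn_lemma2: "\<bar>b\<bar> < \<bar>a\<bar> \<Longrightarrow> sgn ((a::real) + b) = sgn a"
  using sign_lemma[of b a] by (auto simp: sgn_if zero_less_mult_iff split: if_splits)

lemma lin_self_image:
  fixes h :: "'a::euclidean_space \<Rightarrow> 'a"
  assumes "linear h" "inj h" "subspace S" "h ` S \<subseteq> S"
  shows "h ` S = S"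
proof -
  have "dim (h ` S) = dim S" using dim_image_eq[OF assms(1)] assms(2) by (meson inj_on_subset subset_UNIV)
  thus ?thesis using subspace_dim_equal[OF real_vector.linear_subspace_image[OF assms(1,3)] assms(3,4)] by simp
qed

context frg
begin

definition face :: "'a \<Rightarrow> 'a set" where "face x = {y. same_face W x y}"
definition Z :: "'a set \<Rightarrow> ('a \<Rightarrow> 'a) set" where "Z X = {t\<in>Rfl. \<forall>x\<in>X. sp x t = 0}"
definition Hp :: "('a \<Rightarrow> 'a) \<Rightarrow> 'a set" where "Hp t = {x. sp x t = 0}"
definition Fl :: "'a \<Rightarrow> 'a \<Rightarrow> 'a set" where "Fl x y = \<Inter>{H\<in>hyps W. x \<in> H \<and> y \<in> H}"
definition Phi :: "'a set \<Rightarrow> 'a set \<Rightarrow> 'a set" where "Phi A B = \<Inter>(Hp ` (Z A \<inter> Z B))"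

lemma root_rv: assumes "s \<in> W" "is_reflection_along v s" shows "s \<in> Rfl" "\<exists>k. k \<noteq> 0 \<and> v = k *\<^sub>R rv s"
  using root_Rfl[OF assms] root_par[OF root_Rfl[OF assms] assms(2)] by auto

lemma same_face_sp: "same_face W x y \<longleftrightarrow> (\<forall>t\<in>Rfl. sgn (sp x t) = sgn (sp y t))"
proof
  assume h: "same_face W x y"
  show "\<forall>t\<in>Rfl. sgn (sp x t) = sgn (sp y t)"
  proof
    fix t assume t: "t \<in> Rfl"
    hence "\<exists>s\<in>W. is_reflection_along (rv t) s" using rv W_Rfl by blast
    thus "sgn (sp x t) = sgn (sp y t)" using h unfolding same_face_def sp_def by blast
  qed
next
  assume h: "\<forall>t\<in>Rfl. sgn (sp x t) = sgn (sp y t)"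
  show "same_face W x y" unfolding same_face_def
  proof (intro allI impI)
    fix v assume "\<exists>s\<in>W. is_reflection_along v s"
    then obtain s where s: "s \<in> W" "is_reflection_along v s" by blast
    obtain k where k: "v = k *\<^sub>R rv s" using root_rv[OF s] by blast
    have "sgn (sp x s) = sgn (sp y s)" using h root_rv(1)[OF s] by blast
    thus "sgn (x \<bullet> v) = sgn (y \<bullet> v)" unfolding k sp_def by (simp add: sgn_mult)
  qed
qed

lemma face_self: "x \<in> face x" unfolding face_def same_face_def by simp

lemma face_eq: "y \<in> face x \<Longrightarrow> face y = face x"
  unfolding face_def same_face_def by auto

lemma faces_iff: "A \<in> faces W \<longleftrightarrow> (\<exists>x. A = face x)"
  unfolding faces_def face_def by auto

lemma face_mem_eq: "A \<in> faces W \<Longrightarrow> a \<in> A \<Longrightarrow> A = face a"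
proof -
  assume "A \<in> faces W" "a \<in> A"
  then obtain x where "A = face x" using faces_iff by blast
  thus "A = face a" using face_eq \<open>a \<in> A\<close> by simp
qed

lemma faces_ne: "A \<in> faces W \<Longrightarrow> \<exists>a. a \<in> A"
  using faces_iff face_self by blast

lemma face_sp: "y \<in> face x \<Longrightarrow> t \<in> Rfl \<Longrightarrow> sgn (sp y t) = sgn (sp x t)"
  unfolding face_def using same_face_sp by auto

lemma face_sp_iff: "y \<in> face x \<longleftrightarrow> (\<forall>t\<in>Rfl. sgn (sp y t) = sgn (sp x t))"
  unfolding face_def using same_face_sp by auto

lemma sp_W_eq: assumes "w \<in> W" "t \<in> Rfl" shows "sgn (sp (w x) t) = sgn (sp (w y) t) \<longleftrightarrow> sgn (sp x (cj (inv w) t)) = sgn (sp y (cj (inv w) t))"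
proof -
  let ?t = "cj (inv w) t"
  have tt: "t = cj w ?t" "?t \<in> Rfl" using Rfl_cj_surj[OF assms] by auto
  obtain k where k: "k \<noteq> 0" "\<forall>x. sp (w x) (cj w ?t) = k * sp x ?t" using sp_cj[OF assms(1) tt(2)] by blast
  have "sgn (sp (w x) t) = sgn k * sgn (sp x ?t)" "sgn (sp (w y) t) = sgn k * sgn (sp y ?t)"
    using k tt(1) by (metis sgn_mult)+
  thus ?thesis using k(1) by (auto simp: sgn_0_0)
qed

lemma sf_W: assumes "w \<in> W" "y \<in> face x" shows "w y \<in> face (w x)"
  unfolding face_sp_iff
proof
  fix t assume t: "t \<in> Rfl"
  have "cj (inv w) t \<in> Rfl" using Rfl_cj_surj[OF assms(1) t] by blast
  hence "sgn (sp y (cj (inv w) t)) = sgn (sp x (cj (inv w) t))" using face_sp assms(2) by blast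
  thus "sgn (sp (w y) t) = sgn (sp (w x) t)" using sp_W_eq[OF assms(1) t] by blast
qed

lemma face_W: assumes "w \<in> W" shows "w ` face x = face (w x)"
proof
  show "w ` face x \<subseteq> face (w x)" using sf_W assms by blast
  show "face (w x) \<subseteq> w ` face x"
  proof
    fix y assume "y \<in> face (w x)"
    hence "inv w y \<in> face (inv w (w x))" using sf_W W_inv(1)[OF assms] by blast
    hence "inv w y \<in> face x" using W_inv(4)[OF assms] by simp
    thus "y \<in> w ` face x" using W_inv(5)[OF assms] by (metis image_eqI)
  qed
qed

lemma faces_W: "w \<in> W \<Longrightarrow> A \<in> faces W \<Longrightarrow> w ` A \<in> faces W"
  using face_W faces_iff by metis

lemma Dc_closed: "closed (Dc c)"
proof -
  have "Dc c = (\<Inter>t\<in>Rfl. {x. (sp c t *\<^sub>R rv t) \<bullet> x \<ge> 0})"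
    unfolding Dc_def sp_def by (auto simp: inner_commute mult.commute)
  moreover have "closed (\<Inter>t\<in>Rfl. {x. (sp c t *\<^sub>R rv t) \<bullet> x \<ge> 0})"
    by (rule closed_INT) (blast intro: closed_halfspace_ge)
  ultimately show ?thesis by simp
qed

lemma chamber_face: "\<exists>c. gen c \<and> closure (face a) \<subseteq> Dc c"
proof -
  obtain c where c: "gen c" "\<forall>t\<in>Rfl. sp a t \<noteq> 0 \<longrightarrow> sp a t * sp c t > 0" using chamber_near by blast
  have "face a \<subseteq> Dc c"
  proof
    fix y assume y: "y \<in> face a"
    show "y \<in> Dc c" unfolding Dc_def
    proof (safe)
      fix t assume t: "t \<in> Rfl"
      have s: "sgn (sp y t) = sgn (sp a t)" using face_sp y t by blast
      show "sp y t * sp c t \<ge> 0"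
      proof (cases "sp a t = 0")
        case True thus ?thesis using s by (simp add: sgn_0_0)
      next
        case False thus ?thesis using sgn_pos_mult[OF s] c t by (meson less_imp_le)
      qed
    qed
  qed
  thus ?thesis using c(1) closure_minimal Dc_closed by blast
qed

lemma FA: assumes "A \<in> faces W" "X1 \<in> faces W" "X2 \<in> faces W" "X1 \<subseteq> closure A" "X2 \<subseteq> closure A"
  "g \<in> W" "X2 = g ` X1" shows "X1 = X2"
proof -
  obtain a where a: "a \<in> A" using faces_ne assms(1) by blast
  obtain c where c: "gen c" "closure (face a) \<subseteq> Dc c" using chamber_face by blast
  have Aa: "A = face a" using face_mem_eq assms(1) a by blast
  obtain x where x: "x \<in> X1" using faces_ne assms(2) by blast
  have "g x \<in> X2" using x assms(7) by blast
  hence "g x \<in> Dc c" "x \<in> Dc c" using assms(4,5) x c Aa by blast+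
  hence "g x = x" using FD[OF c(1) assms(6)] by blast
  hence "x \<in> X2" using \<open>g x \<in> X2\<close> by simp
  thus ?thesis using face_mem_eq assms(2,3) x by metis
qed

lemma F1: assumes "w \<in> W" "A \<in> faces W" "w ` A = A" "a \<in> A" shows "w a = a"
proof -
  obtain c where c: "gen c" "closure (face a) \<subseteq> Dc c" using chamber_face by blast
  have Aa: "A = face a" using face_mem_eq assms(2,4) by blast
  have "w a \<in> A" using assms(3,4) by blast
  hence "w a \<in> Dc c" "a \<in> Dc c" using c Aa assms(4) closure_subset by blast+
  thus ?thesis using FD[OF c(1) assms(1)] by blast
qed

lemma fix_lemma:
  assumes "w \<in> W" "w q = q" "\<forall>t\<in>Rfl. sp q t = 0 \<longrightarrow> sp z t = 0"
  shows "w z = z"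
proof -
  obtain c where c: "gen c" "closure (face q) \<subseteq> Dc c" using chamber_face by blast
  let ?T = "{t\<in>Rfl. sp q t \<noteq> 0}"
  have fin: "finite ?T" using finRfl by simp
  have pos: "\<forall>t\<in>?T. \<bar>sp q t\<bar> > 0" by auto
  obtain \<epsilon> where e: "\<epsilon> > 0" "\<forall>t\<in>?T. \<epsilon> * \<bar>sp z t\<bar> < \<bar>sp q t\<bar>"
    using small_eps[OF fin pos, of "\<lambda>t. sp z t"] by (meson order.refl less_imp_le)
  define p where "p = q + \<epsilon> *\<^sub>R z"
  have spp: "sp p t = sp q t + \<epsilon> * sp z t" for t unfolding p_def sp_def by (simp add: inner_add_left)
  have "p \<in> face q" unfolding face_sp_iff
  proof
    fix t assume t: "t \<in> Rfl"
    show "sgn (sp p t) = sgn (sp q t)"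
    proof (cases "sp q t = 0")
      case True thus ?thesis using assms(3) t spp by simp
    next
      case False
      hence "\<bar>\<epsilon> * sp z t\<bar> < \<bar>sp q t\<bar>" using e t by (simp add: abs_mult)
      thus ?thesis using spp sgn_lemma2 by simp
    qed
  qed
  hence pD: "p \<in> Dc c" using c closure_subset by blast
  have "w p \<in> face (w q)" using sf_W[OF assms(1) \<open>p \<in> face q\<close>] .
  hence "w p \<in> Dc c" using assms(2) c closure_subset by auto
  hence "w p = p" using FD[OF c(1) assms(1) pD] by blast
  moreover have "w p = q + \<epsilon> *\<^sub>R w z" unfolding p_def using W_lin[OF assms(1)] assms(2)
    by (simp add: linear_add linear_scale)
  ultimately have "\<epsilon> *\<^sub>R w z = \<epsilon> *\<^sub>R z" unfolding p_def by simp
  thus ?thesis using e(1) by simp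
qed

lemma Z_face: "A \<in> faces W \<Longrightarrow> a \<in> A \<Longrightarrow> t \<in> Z A \<longleftrightarrow> t \<in> Rfl \<and> sp a t = 0"
proof -
  assume A: "A \<in> faces W" "a \<in> A"
  have "sp x t = 0 \<longleftrightarrow> sp a t = 0" if "x \<in> A" "t \<in> Rfl" for x
    using face_sp[of x a t] face_mem_eq[OF A] that by (auto simp: sgn_0_0)
  thus ?thesis unfolding Z_def using A(2) by blast
qed

lemma Z_closure: "A' \<subseteq> closure A \<Longrightarrow> Z A \<subseteq> Z A'"
proof
  fix t assume A': "A' \<subseteq> closure A" and t: "t \<in> Z A"
  have "A \<subseteq> {x. rv t \<bullet> x = 0}" using t unfolding Z_def sp_def by (auto simp: inner_commute)
  hence "closure A \<subseteq> {x. rv t \<bullet> x = 0}" using closure_minimal closed_hyperplane by blast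
  thus "t \<in> Z A'" using A' t unfolding Z_def sp_def by (auto simp: inner_commute)
qed

lemma G_from_Z:
  assumes fa: "A \<in> faces W" "B \<in> faces W" "A' \<in> faces W" "B' \<in> faces W"
    and zz: "Z A' \<inter> Z B' \<subseteq> Z A \<inter> Z B"
    and w: "w \<in> W" "w ` A' = A'" "w ` B' = B'"
  shows "w ` A = A \<and> w ` B = B"
proof -
  obtain a' b' where ab: "a' \<in> A'" "b' \<in> B'" using faces_ne fa by metis
  have fa': "w a' = a'" "w b' = b'" using F1 w fa ab by blast+
  let ?B = "(\<lambda>t. - sp a' t / sp b' t) ` Rfl"
  obtain l where l: "l \<notin> ?B" using avoid_finite[of ?B 1] finRfl by auto
  define q where "q = a' + l *\<^sub>R b'"
  have spq: "sp q t = sp a' t + l * sp b' t" for t unfolding q_def sp_def by (simp add: inner_add_left)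
  have qz: "sp a' t = 0 \<and> sp b' t = 0" if t: "t \<in> Rfl" "sp q t = 0" for t
  proof (cases "sp b' t = 0")
    case True thus ?thesis using spq t by simp
  next
    case False
    hence "l = - sp a' t / sp b' t" using spq t by (simp add: field_simps)
    thus ?thesis using l t by blast
  qed
  have wq: "w q = q" unfolding q_def using W_lin[OF w(1)] fa' by (simp add: linear_add linear_scale)
  have fixX: "\<forall>x\<in>X. w x = x" if X: "X \<in> faces W" "\<And>t. t \<in> Z A' \<inter> Z B' \<Longrightarrow> t \<in> Z X" for X
  proof
    fix x assume x: "x \<in> X"
    show "w x = x"
    proof (rule fix_lemma[OF w(1) wq], safe)
      fix t assume t: "t \<in> Rfl" "sp q t = 0"
      hence "t \<in> Z A'" "t \<in> Z B'" using qz Z_face fa ab by blast+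
      hence "t \<in> Z X" using X(2) by blast
      thus "sp x t = 0" using x unfolding Z_def by blast
    qed
  qed
  have "\<forall>x\<in>A. w x = x" using fixX[OF fa(1)] zz by blast
  moreover have "\<forall>x\<in>B. w x = x" using fixX[OF fa(2)] zz by blast
  ultimately show ?thesis by (simp add: image_iff set_eq_iff)
qed

lemma Z_from_G:
  assumes fa: "A \<in> faces W" "B \<in> faces W"
    and G: "\<And>w. w \<in> W \<Longrightarrow> w ` A' = A' \<Longrightarrow> w ` B' = B' \<Longrightarrow> w ` A = A \<and> w ` B = B"
  shows "Z A' \<inter> Z B' \<subseteq> Z A \<inter> Z B"
proof
  fix t assume t: "t \<in> Z A' \<inter> Z B'"
  have tR: "t \<in> Rfl" using t unfolding Z_def by blast
  have tW: "t \<in> W" using tR W_Rfl by blast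
  have "t ` A' = A'" "t ` B' = B'" using t Rfl_fix[OF tR] unfolding Z_def
    by (auto simp: image_iff)
  hence tAB: "t ` A = A" "t ` B = B" using G tW by blast+
  have zX: "t \<in> Z X" if X: "X \<in> faces W" "t ` X = X" for X
    unfolding Z_def
  proof (safe intro!: tR)
    fix a assume a: "a \<in> X"
    have Xa: "X = face a" using face_mem_eq X a by blast
    have "t a \<in> X" using X a by blast
    define m where "m = (1/2) *\<^sub>R (a + t a)"
    have spt: "sp (t a) t = - sp a t" using Rfl_apply[OF tR, of a] rv_nz[OF tR]
      unfolding sp_def by (simp add: inner_diff_left)
    have "sp m t = 0" unfolding m_def sp_def using spt unfolding sp_def by (simp add: inner_add_left)
    moreover have "sgn (sp m t) = sgn (sp a t)"
    proof -
      have h: "sgn (sp a t) = sgn (sp (t a) t)" using face_sp \<open>t a \<in> X\<close> Xa tR by simp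
      have e: "sp m t = (1/2) * (sp a t + sp (t a) t)" unfolding m_def sp_def by (simp add: inner_add_left)
      show ?thesis by (simp only: e sgn_mid[OF h])
    qed
    ultimately show "sp a t = 0" by (simp add: sgn_0_0)
  qed
  show "t \<in> Z A \<inter> Z B" using zX fa tAB by blast
qed

end


context frg
begin

lemma hyps_eq: "hyps W = Hp ` Rfl"
proof
  show "hyps W \<subseteq> Hp ` Rfl"
  proof
    fix H assume "H \<in> hyps W"
    then obtain v s where vs: "H = {x. x \<bullet> v = 0}" "s \<in> W" "is_reflection_along v s" unfolding hyps_def by blast
    obtain k where k: "k \<noteq> 0" "v = k *\<^sub>R rv s" using root_rv[OF vs(2,3)] by blast
    have "H = Hp s" unfolding vs(1) Hp_def sp_def k(2) using k(1) by auto
    thus "H \<in> Hp ` Rfl" using root_rv(1)[OF vs(2,3)] by blast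
  qed
  show "Hp ` Rfl \<subseteq> hyps W"
  proof
    fix H assume "H \<in> Hp ` Rfl"
    then obtain t where t: "t \<in> Rfl" "H = Hp t" by blast
    have "is_reflection_along (rv t) t" "t \<in> W" using rv t W_Rfl by auto
    thus "H \<in> hyps W" unfolding hyps_def t(2) Hp_def sp_def by blast
  qed
qed

lemma Fl_mem: "z \<in> Fl x y \<longleftrightarrow> (\<forall>t\<in>Rfl. sp x t = 0 \<and> sp y t = 0 \<longrightarrow> sp z t = 0)"
  unfolding Fl_def hyps_eq Hp_def by auto

lemma Fl_flat: "Fl x y \<in> flats W"
  unfolding Fl_def flats_def by blast

lemma Fl_self: "x \<in> Fl x y" "y \<in> Fl x y" using Fl_mem by auto

lemma flat_sub: assumes "M \<in> flats W" "x \<in> M" "y \<in> M" shows "Fl x y \<subseteq> M"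
proof -
  obtain F where F: "M = \<Inter>F" "F \<subseteq> hyps W" using assms(1) unfolding flats_def by blast
  show ?thesis unfolding Fl_def F(1) using F assms(2,3) by blast
qed

lemma sp_W0: assumes "w \<in> W" "t \<in> Rfl" shows "sp (w u) t = 0 \<longleftrightarrow> sp u (cj (inv w) t) = 0"
proof -
  let ?t = "cj (inv w) t"
  have tt: "t = cj w ?t" "?t \<in> Rfl" using Rfl_cj_surj[OF assms] by auto
  obtain k where k: "k \<noteq> 0" "\<forall>x. sp (w x) (cj w ?t) = k * sp x ?t" using sp_cj[OF assms(1) tt(2)] by blast
  show ?thesis using k tt(1) by (metis mult_eq_0_iff)
qed

lemma Fl_W: assumes "w \<in> W" shows "Fl (w x) (w y) = w ` Fl x y"
proof -
  have iw: "inv w \<in> W" using W_inv assms by blast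
  have key: "z \<in> Fl (w x) (w y) \<longleftrightarrow> inv w z \<in> Fl x y" for z
  proof
    assume z: "z \<in> Fl (w x) (w y)"
    show "inv w z \<in> Fl x y" unfolding Fl_mem
    proof (intro ballI impI)
      fix t0 assume t0: "t0 \<in> Rfl" "sp x t0 = 0 \<and> sp y t0 = 0"
      let ?t = "cj w t0"
      have tR: "?t \<in> Rfl" using cj_Rfl[OF assms t0(1)] .
      have e: "cj (inv w) ?t = t0" using cj_cj(1)[OF assms] by simp
      have "sp (w x) ?t = 0" "sp (w y) ?t = 0" using sp_W0[OF assms tR] e t0 by simp_all
      hence "sp z ?t = 0" using z tR unfolding Fl_mem by blast
      hence "sp (w (inv w z)) ?t = 0" using W_inv(5)[OF assms] by simp
      thus "sp (inv w z) t0 = 0" using sp_W0[OF assms tR] e by simp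
    qed
  next
    assume z: "inv w z \<in> Fl x y"
    show "z \<in> Fl (w x) (w y)" unfolding Fl_mem
    proof (intro ballI impI)
      fix t assume t: "t \<in> Rfl" "sp (w x) t = 0 \<and> sp (w y) t = 0"
      let ?t = "cj (inv w) t"
      have tR: "?t \<in> Rfl" using Rfl_cj_surj[OF assms t(1)] by blast
      have "sp x ?t = 0" "sp y ?t = 0" using sp_W0[OF assms t(1)] t by auto
      hence "sp (inv w z) ?t = 0" using z tR unfolding Fl_mem by blast
      hence "sp (w (inv w z)) t = 0" using sp_W0[OF assms t(1)] by blast
      thus "sp z t = 0" using W_inv(5)[OF assms] by simp
    qed
  qed
  show ?thesis
  proof
    show "Fl (w x) (w y) \<subseteq> w ` Fl x y"
    proof
      fix z assume "z \<in> Fl (w x) (w y)"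
      hence "inv w z \<in> Fl x y" using key by blast
      thus "z \<in> w ` Fl x y" using W_inv(5)[OF assms] by (metis image_eqI)
    qed
    show "w ` Fl x y \<subseteq> Fl (w x) (w y)" using key W_inv(4)[OF assms] by auto
  qed
qed

lemma Phi_mem: "z \<in> Phi A B \<longleftrightarrow> (\<forall>t\<in>Z A \<inter> Z B. sp z t = 0)"
  unfolding Phi_def Hp_def by auto

lemma Fl_Phi: assumes "A \<in> faces W" "B \<in> faces W" "a \<in> A" "b \<in> B" shows "Fl a b = Phi A B"
  using Z_face[OF assms(1,3)] Z_face[OF assms(2,4)] unfolding set_eq_iff Fl_mem Phi_mem by blast

lemma Phi_subspace: "subspace (Phi A B)"
  unfolding Phi_def Hp_def sp_def by (rule subspace_Inter) (auto intro: subspace_hyperplane2)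

lemma gp_iff: assumes "L \<in> flats W" shows "(y, x) \<in> generic_part W L \<longleftrightarrow> L = Fl x y"
proof
  assume h: "(y, x) \<in> generic_part W L"
  hence xy: "x \<in> L" "y \<in> L" unfolding generic_part_def by auto
  have sub: "Fl x y \<subseteq> L" using flat_sub[OF assms xy] .
  show "L = Fl x y"
  proof (rule ccontr)
    assume ne: "L \<noteq> Fl x y"
    then obtain z where z: "z \<in> L" "z \<notin> Fl x y" using sub by blast
    have "Fl x y \<times> Fl x y \<subset> L \<times> L" using sub z by blast
    moreover have "(y, x) \<in> Fl x y \<times> Fl x y" using Fl_self by auto
    ultimately show False using h Fl_flat unfolding generic_part_def by blast
  qed
next
  assume L: "L = Fl x y"
  have "(y, x) \<in> L \<times> L" using L Fl_self by auto
  moreover have "\<not> (\<exists>M\<in>flats W. M \<times> M \<subset> L \<times> L \<and> (y, x) \<in> M \<times> M)"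
  proof
    assume "\<exists>M\<in>flats W. M \<times> M \<subset> L \<times> L \<and> (y, x) \<in> M \<times> M"
    then obtain M where M: "M \<in> flats W" "M \<times> M \<subset> L \<times> L" "x \<in> M" "y \<in> M" by blast
    have "L \<subseteq> M" using flat_sub[OF M(1,3,4)] L by simp
    thus False using M(2) by blast
  qed
  ultimately show "(y, x) \<in> generic_part W L" unfolding generic_part_def by blast
qed

lemma quot_W: assumes "w \<in> W" shows "quot W (w b, w a) = quot W (b, a)"
proof
  show "quot W (w b, w a) \<subseteq> quot W (b, a)"
    unfolding quot_def using W_comp[OF _ assms] by (auto intro!: image_eqI[where x = "_ \<circ> w"])
  show "quot W (b, a) \<subseteq> quot W (w b, w a)"
  proof
    fix p assume "p \<in> quot W (b, a)"
    then obtain u where u: "u \<in> W" "p = (u b, u a)" unfolding quot_def by auto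
    have "u \<circ> inv w \<in> W" using W_comp u(1) W_inv(1)[OF assms] by blast
    moreover have "p = ((u \<circ> inv w) (w b), (u \<circ> inv w) (w a))" using u W_inv(4)[OF assms] by simp
    ultimately show "p \<in> quot W (w b, w a)" unfolding quot_def by (intro image_eqI[where x = "u \<circ> inv w"]) auto
  qed
qed

lemma in_gp_img: assumes "L \<in> flats W"
  shows "quot W (b, a) \<in> quot W ` generic_part W L \<longleftrightarrow> (\<exists>w\<in>W. L = Fl (w a) (w b))"
proof
  assume "quot W (b, a) \<in> quot W ` generic_part W L"
  then obtain z where z: "z \<in> generic_part W L" "quot W (b, a) = quot W z" by auto
  have "z \<in> quot W z" unfolding quot_def using id_W by (auto intro!: image_eqI[where x = id])
  hence "z \<in> quot W (b, a)" using z(2) by simp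
  then obtain w where w: "w \<in> W" "z = (w b, w a)" unfolding quot_def by auto
  thus "\<exists>w\<in>W. L = Fl (w a) (w b)" using z(1) gp_iff[OF assms] by blast
next
  assume "\<exists>w\<in>W. L = Fl (w a) (w b)"
  then obtain w where w: "w \<in> W" "L = Fl (w a) (w b)" by blast
  hence "(w b, w a) \<in> generic_part W L" using gp_iff[OF assms] by blast
  moreover have "quot W (w b, w a) = quot W (b, a)" using quot_W w(1) by blast
  ultimately show "quot W (b, a) \<in> quot W ` generic_part W L" by (metis image_eqI)
qed

lemma orb_some: "\<exists>g\<in>W. (SOME q. q \<in> pair_orbit W (A, B)) = (g ` A, g ` B)"
proof -
  have "(id ` A, id ` B) \<in> pair_orbit W (A, B)" unfolding pair_orbit_def using id_W by (intro image_eqI[where x = id]) auto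
  hence "(SOME q. q \<in> pair_orbit W (A, B)) \<in> pair_orbit W (A, B)" by (rule someI)
  thus ?thesis unfolding pair_orbit_def by auto
qed

lemma U_orbit:
  assumes fa: "A \<in> faces W" "B \<in> faces W" and L: "L \<in> flats W"
  shows "U_xi W (pair_orbit W (A, B)) \<subseteq> quot W ` generic_part W L \<longleftrightarrow> (\<exists>w\<in>W. L = w ` Phi A B)"
proof -
  obtain g where g: "g \<in> W" "(SOME q. q \<in> pair_orbit W (A, B)) = (g ` A, g ` B)" using orb_some by blast
  have U: "U_xi W (pair_orbit W (A, B)) = quot W ` {(b, a) | a b. a \<in> g ` A \<and> b \<in> g ` B}"
    unfolding U_xi_def Let_def g(2) by simp
  have key: "\<And>a0 b0 w. a0 \<in> A \<Longrightarrow> b0 \<in> B \<Longrightarrow> w \<in> W \<Longrightarrow> Fl (w a0) (w b0) = w ` Phi A B"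
    using Fl_W Fl_Phi[OF fa] by metis
  show ?thesis
  proof
    assume h: "U_xi W (pair_orbit W (A, B)) \<subseteq> quot W ` generic_part W L"
    obtain a0 b0 where ab: "a0 \<in> A" "b0 \<in> B" using faces_ne fa by metis
    have "quot W (g b0, g a0) \<in> U_xi W (pair_orbit W (A, B))" unfolding U using ab by blast
    hence "quot W (g b0, g a0) \<in> quot W ` generic_part W L" using h by blast
    then obtain w where w: "w \<in> W" "L = Fl (w (g a0)) (w (g b0))" using in_gp_img[OF L] by blast
    have "w \<circ> g \<in> W" using W_comp w(1) g(1) by blast
    moreover have "L = (w \<circ> g) ` Phi A B" using w(2) key[OF ab \<open>w \<circ> g \<in> W\<close>] by simp
    ultimately show "\<exists>w\<in>W. L = w ` Phi A B" by blast
  next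
    assume "\<exists>w\<in>W. L = w ` Phi A B"
    then obtain w where w: "w \<in> W" "L = w ` Phi A B" by blast
    show "U_xi W (pair_orbit W (A, B)) \<subseteq> quot W ` generic_part W L"
    proof
      fix p assume "p \<in> U_xi W (pair_orbit W (A, B))"
      then obtain a0 b0 where ab: "a0 \<in> A" "b0 \<in> B" "p = quot W (g b0, g a0)" unfolding U by blast
      have w': "w \<circ> inv g \<in> W" using W_comp w(1) W_inv(1)[OF g(1)] by blast
      have "Fl ((w \<circ> inv g) (g a0)) ((w \<circ> inv g) (g b0)) = Fl (w a0) (w b0)" using W_inv(4)[OF g(1)] by simp
      also have "\<dots> = L" using key[OF ab(1,2) w(1)] w(2) by simp
      finally show "p \<in> quot W ` generic_part W L" using in_gp_img[OF L] w' ab(3) by metis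
    qed
  qed
qed

lemma Phi_mono: assumes "A' \<subseteq> closure A" "B' \<subseteq> closure B" shows "Phi A' B' \<subseteq> Phi A B"
  using Z_closure[OF assms(1)] Z_closure[OF assms(2)] unfolding subset_iff Phi_mem by blast

lemma Z_mono: assumes "A' \<subseteq> closure A" "B' \<subseteq> closure B" shows "Z A \<inter> Z B \<subseteq> Z A' \<inter> Z B'"
  using Z_closure[OF assms(1)] Z_closure[OF assms(2)] by blast

lemma Z_from_Phi:
  assumes "A \<in> faces W" "B \<in> faces W" "A' \<subseteq> closure A" "B' \<subseteq> closure B" "Phi A' B' = Phi A B"
  shows "Z A \<inter> Z B = Z A' \<inter> Z B'"
proof
  show "Z A \<inter> Z B \<subseteq> Z A' \<inter> Z B'" using Z_mono assms(3,4) .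
  show "Z A' \<inter> Z B' \<subseteq> Z A \<inter> Z B"
  proof
    fix t assume t: "t \<in> Z A' \<inter> Z B'"
    have tR: "t \<in> Rfl" using t unfolding Z_def by blast
    have "A \<subseteq> Phi A B" "B \<subseteq> Phi A B" unfolding subset_iff Phi_mem Z_def by auto
    hence "\<forall>x\<in>A \<union> B. x \<in> Phi A' B'" using assms(5) by auto
    hence "\<forall>x\<in>A \<union> B. sp x t = 0" using t unfolding Phi_mem by blast
    thus "t \<in> Z A \<inter> Z B" unfolding Z_def using tR by blast
  qed
qed

lemma anodyne_iff:
  assumes fa: "A \<in> faces W" "B \<in> faces W" "A' \<in> faces W" "B' \<in> faces W"
    and cl: "A' \<subseteq> closure A" "B' \<subseteq> closure B"
  shows "anodyne W (pair_orbit W (A, B)) (pair_orbit W (A', B')) \<longleftrightarrow> Z A \<inter> Z B = Z A' \<inter> Z B'"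
proof
  assume "anodyne W (pair_orbit W (A, B)) (pair_orbit W (A', B'))"
  then obtain L where L: "L \<in> flats W"
    "U_xi W (pair_orbit W (A, B)) \<subseteq> quot W ` generic_part W L"
    "U_xi W (pair_orbit W (A', B')) \<subseteq> quot W ` generic_part W L"
    unfolding anodyne_def strata0_def by blast
  obtain w1 where w1: "w1 \<in> W" "L = w1 ` Phi A B" using U_orbit[OF fa(1,2) L(1)] L(2) by blast
  obtain w2 where w2: "w2 \<in> W" "L = w2 ` Phi A' B'" using U_orbit[OF fa(3,4) L(1)] L(3) by blast
  define h where "h = inv w2 \<circ> w1"
  have hW: "h \<in> W" unfolding h_def using W_comp W_inv(1) w1(1) w2(1) by blast
  have "h ` Phi A B = inv w2 ` L" unfolding h_def w1(2) by (simp add: image_comp)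
  also have "\<dots> = Phi A' B'" unfolding w2(2) image_comp using W_inv(2)[OF w2(1)] by simp
  finally have hP: "h ` Phi A B = Phi A' B'" .
  have "h ` Phi A B \<subseteq> Phi A B" using hP Phi_mono[OF cl] by simp
  moreover have "inj h" using W_inv(6)[OF hW] bij_is_inj by blast
  ultimately have "h ` Phi A B = Phi A B" using lin_self_image[OF W_lin[OF hW] _ Phi_subspace] by blast
  hence "Phi A' B' = Phi A B" using hP by simp
  thus "Z A \<inter> Z B = Z A' \<inter> Z B'" using Z_from_Phi fa cl by blast
next
  assume z: "Z A \<inter> Z B = Z A' \<inter> Z B'"
  hence P: "Phi A B = Phi A' B'" unfolding Phi_def by simp
  obtain a0 b0 where ab: "a0 \<in> A" "b0 \<in> B" using faces_ne fa by metis
  have L: "Phi A B \<in> flats W" using Fl_Phi[OF fa(1,2) ab] Fl_flat by metis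
  have i: "Phi A B = id ` Phi A B" by simp
  have "U_xi W (pair_orbit W (A, B)) \<subseteq> quot W ` generic_part W (Phi A B)"
    using U_orbit[OF fa(1,2) L] id_W i by blast
  moreover have "U_xi W (pair_orbit W (A', B')) \<subseteq> quot W ` generic_part W (Phi A B)"
    using U_orbit[OF fa(3,4) L] id_W i P by metis
  moreover have "quot W ` generic_part W (Phi A B) \<in> strata0 W" unfolding strata0_def using L by blast
  ultimately show "anodyne W (pair_orbit W (A, B)) (pair_orbit W (A', B'))" unfolding anodyne_def by blast
qed

end


context frg
begin

lemma orb_mem: "w \<in> W \<Longrightarrow> (w ` A, w ` B) \<in> pair_orbit W (A, B)"
  unfolding pair_orbit_def by (intro image_eqI[where x = w]) auto

lemma orb_elem: "q \<in> pair_orbit W (A, B) \<Longrightarrow> \<exists>w\<in>W. q = (w ` A, w ` B)"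
  unfolding pair_orbit_def by auto

lemma inv_img: assumes "w \<in> W" shows "w ` (inv w ` X) = X" "inv w ` (w ` X) = X"
  using W_inv(4,5)[OF assms] by (auto simp: image_comp image_iff)

lemma orb_shift: assumes "g \<in> W" shows "pair_orbit W (g ` A, g ` B) = pair_orbit W (A, B)"
proof
  show "pair_orbit W (g ` A, g ` B) \<subseteq> pair_orbit W (A, B)"
  proof
    fix q assume "q \<in> pair_orbit W (g ` A, g ` B)"
    then obtain w where w: "w \<in> W" "q = (w ` g ` A, w ` g ` B)" using orb_elem by blast
    hence q2: "q = ((w \<circ> g) ` A, (w \<circ> g) ` B)" by (simp add: image_comp)
    show "q \<in> pair_orbit W (A, B)" unfolding q2 by (rule orb_mem) (rule W_comp[OF w(1) assms])
  qed
  show "pair_orbit W (A, B) \<subseteq> pair_orbit W (g ` A, g ` B)"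
  proof
    fix q assume "q \<in> pair_orbit W (A, B)"
    then obtain w where w: "w \<in> W" "q = (w ` A, w ` B)" using orb_elem by blast
    have "(w \<circ> inv g) ` (g ` A) = w ` A" "(w \<circ> inv g) ` (g ` B) = w ` B"
      by (simp_all only: image_comp[symmetric] inv_img(2)[OF assms])
    moreover have "w \<circ> inv g \<in> W" using W_comp w(1) W_inv(1)[OF assms] by blast
    ultimately show "q \<in> pair_orbit W (g ` A, g ` B)" using orb_mem[of "w \<circ> inv g" "g ` A" "g ` B"] w(2) by (simp only:)
  qed
qed

lemma cl_W: assumes "w \<in> W" "X \<subseteq> closure Y" shows "w ` X \<subseteq> closure (w ` Y)"
  using closure_linear_image_subset[OF W_lin[OF assms(1)], of Y] assms(2) by blast

lemma proj_val:
  assumes fa: "A \<in> faces W" "B \<in> faces W" "A' \<in> faces W" "B' \<in> faces W"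
    and cl: "A' \<subseteq> closure A" "B' \<subseteq> closure B" and w: "w \<in> W"
  shows "proj_xi (pair_orbit W (A', B')) (w ` A, w ` B) = (w ` A', w ` B')"
  unfolding proj_xi_def face_le_def
proof (rule the_equality)
  show "(w ` A', w ` B') \<in> pair_orbit W (A', B') \<and> fst (w ` A', w ` B') \<subseteq> closure (fst (w ` A, w ` B))
    \<and> snd (w ` A', w ` B') \<subseteq> closure (snd (w ` A, w ` B))"
    using orb_mem[OF w] cl_W[OF w cl(1)] cl_W[OF w cl(2)] by simp
next
  fix q assume q: "q \<in> pair_orbit W (A', B') \<and> fst q \<subseteq> closure (fst (w ` A, w ` B))
    \<and> snd q \<subseteq> closure (snd (w ` A, w ` B))"
  then obtain u where u: "u \<in> W" "q = (u ` A', u ` B')" using orb_elem by blast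
  define h where "h = inv w \<circ> u"
  have iw: "inv w \<in> W" using W_inv w by blast
  have hW: "h \<in> W" unfolding h_def using W_comp iw u(1) by blast
  have fix1: "X' = h ` X'" if X: "X \<in> faces W" "X' \<in> faces W" "X' \<subseteq> closure X" "u ` X' \<subseteq> closure (w ` X)" for X X'
  proof -
    have "h ` X' = inv w ` (u ` X')" unfolding h_def by (simp add: image_comp)
    also have "\<dots> \<subseteq> closure (inv w ` (w ` X))" using cl_W[OF iw X(4)] .
    also have "\<dots> = closure X" using inv_img(2)[OF w] by simp
    finally have "h ` X' \<subseteq> closure X" .
    thus ?thesis using FA[OF X(1) X(2) faces_W[OF hW X(2)] X(3) _ hW] by blast
  qed
  have wh: "w ` (h ` X) = u ` X" for X
  proof -
    have "h ` X = inv w ` (u ` X)" unfolding h_def by (simp add: image_comp)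
    thus ?thesis using inv_img(1)[OF w] by simp
  qed
  have "A' = h ` A'" using fix1[OF fa(1) fa(3) cl(1)] q u(2) by simp
  hence a: "u ` A' = w ` A'" using wh[of A'] by simp
  have "B' = h ` B'" using fix1[OF fa(2) fa(4) cl(2)] q u(2) by simp
  hence b: "u ` B' = w ` B'" using wh[of B'] by simp
  show "q = (w ` A', w ` B')" using u(2) a b by simp
qed

lemma proj_img:
  assumes fa: "A \<in> faces W" "B \<in> faces W" "A' \<in> faces W" "B' \<in> faces W"
    and cl: "A' \<subseteq> closure A" "B' \<subseteq> closure B"
  shows "proj_xi (pair_orbit W (A', B')) ` pair_orbit W (A, B) = pair_orbit W (A', B')"
proof
  show "proj_xi (pair_orbit W (A', B')) ` pair_orbit W (A, B) \<subseteq> pair_orbit W (A', B')"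
  proof
    fix q assume "q \<in> proj_xi (pair_orbit W (A', B')) ` pair_orbit W (A, B)"
    then obtain p where p: "p \<in> pair_orbit W (A, B)" "q = proj_xi (pair_orbit W (A', B')) p" by blast
    obtain w where w: "w \<in> W" "p = (w ` A, w ` B)" using orb_elem p(1) by blast
    show "q \<in> pair_orbit W (A', B')" using p(2) w proj_val[OF fa cl w(1)] orb_mem[OF w(1)] by simp
  qed
  show "pair_orbit W (A', B') \<subseteq> proj_xi (pair_orbit W (A', B')) ` pair_orbit W (A, B)"
  proof
    fix q assume "q \<in> pair_orbit W (A', B')"
    then obtain w where w: "w \<in> W" "q = (w ` A', w ` B')" using orb_elem by blast
    hence "q = proj_xi (pair_orbit W (A', B')) (w ` A, w ` B)" using proj_val[OF fa cl] by simp
    thus "q \<in> proj_xi (pair_orbit W (A', B')) ` pair_orbit W (A, B)" using orb_mem[OF w(1)] by blast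
  qed
qed

lemma proj_inj_iff:
  assumes fa: "A \<in> faces W" "B \<in> faces W" "A' \<in> faces W" "B' \<in> faces W"
    and cl: "A' \<subseteq> closure A" "B' \<subseteq> closure B"
  shows "inj_on (proj_xi (pair_orbit W (A', B'))) (pair_orbit W (A, B)) \<longleftrightarrow>
    (\<forall>w\<in>W. w ` A' = A' \<and> w ` B' = B' \<longrightarrow> w ` A = A \<and> w ` B = B)"
proof
  assume inj: "inj_on (proj_xi (pair_orbit W (A', B'))) (pair_orbit W (A, B))"
  show "\<forall>w\<in>W. w ` A' = A' \<and> w ` B' = B' \<longrightarrow> w ` A = A \<and> w ` B = B"
  proof (intro ballI impI)
    fix w assume w: "w \<in> W" "w ` A' = A' \<and> w ` B' = B'"
    have "proj_xi (pair_orbit W (A', B')) (w ` A, w ` B) = (A', B')" using proj_val[OF fa cl w(1)] w(2) by simp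
    moreover have "proj_xi (pair_orbit W (A', B')) (id ` A, id ` B) = (A', B')" using proj_val[OF fa cl id_W] by simp
    ultimately have "proj_xi (pair_orbit W (A', B')) (w ` A, w ` B) = proj_xi (pair_orbit W (A', B')) (id ` A, id ` B)"
      by simp
    hence "(w ` A, w ` B) = (id ` A, id ` B)"
      using inj orb_mem[OF w(1), of A B] orb_mem[OF id_W, of A B] unfolding inj_on_def by blast
    thus "w ` A = A \<and> w ` B = B" by simp
  qed
next
  assume G: "\<forall>w\<in>W. w ` A' = A' \<and> w ` B' = B' \<longrightarrow> w ` A = A \<and> w ` B = B"
  show "inj_on (proj_xi (pair_orbit W (A', B'))) (pair_orbit W (A, B))"
  proof (rule inj_onI)
    fix p q assume p: "p \<in> pair_orbit W (A, B)" and q: "q \<in> pair_orbit W (A, B)"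
      and e: "proj_xi (pair_orbit W (A', B')) p = proj_xi (pair_orbit W (A', B')) q"
    obtain w where w: "w \<in> W" "p = (w ` A, w ` B)" using orb_elem p by blast
    obtain u where u: "u \<in> W" "q = (u ` A, u ` B)" using orb_elem q by blast
    have e2: "w ` A' = u ` A'" "w ` B' = u ` B'" using e proj_val[OF fa cl w(1)] proj_val[OF fa cl u(1)] w u by simp_all
    define h where "h = inv u \<circ> w"
    have hW: "h \<in> W" unfolding h_def using W_comp W_inv(1)[OF u(1)] w(1) by blast
    have hX: "h ` X = inv u ` (w ` X)" for X unfolding h_def by (simp add: image_comp)
    have "h ` A' = A'" "h ` B' = B'" using hX e2 inv_img(2)[OF u(1)] by simp_all
    hence "h ` A = A" "h ` B = B" using G hW by blast+
    hence "inv u ` (w ` A) = A" "inv u ` (w ` B) = B" using hX by simp_all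
    hence "u ` (inv u ` (w ` A)) = u ` A" "u ` (inv u ` (w ` B)) = u ` B" by simp_all
    hence "w ` A = u ` A" "w ` B = u ` B" using inv_img(1)[OF u(1)] by simp_all
    thus "p = q" using w u by simp
  qed
qed

lemma main_local:
  assumes fa: "A \<in> faces W" "B \<in> faces W" "A' \<in> faces W" "B' \<in> faces W"
    and cl: "A' \<subseteq> closure A" "B' \<subseteq> closure B"
    and m: "m = pair_orbit W (A, B)" and n: "n = pair_orbit W (A', B')"
  shows "(anodyne W m n \<longleftrightarrow> card m = card n) \<and> (card m = card n \<longleftrightarrow> bij_betw (proj_xi n) m n)"
proof -
  have finm: "finite m" unfolding m pair_orbit_def using finW by simp
  have img: "proj_xi n ` m = n" unfolding m n using proj_img[OF fa cl] .
  have c0: "inj_on (proj_xi n) m \<longleftrightarrow> card (proj_xi n ` m) = card m" by (rule inj_on_iff_eq_card[OF finm])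
  have c: "card m = card n \<longleftrightarrow> inj_on (proj_xi n) m" unfolding c0 img by (rule eq_commute)
  have b: "bij_betw (proj_xi n) m n \<longleftrightarrow> inj_on (proj_xi n) m" using img unfolding bij_betw_def by blast
  let ?G = "\<forall>w\<in>W. w ` A' = A' \<and> w ` B' = B' \<longrightarrow> w ` A = A \<and> w ` B = B"
  have G_Z: "?G \<longleftrightarrow> Z A \<inter> Z B = Z A' \<inter> Z B'"
  proof
    assume G: ?G
    have "Z A' \<inter> Z B' \<subseteq> Z A \<inter> Z B"
    proof (rule Z_from_G[OF fa(1,2)])
      fix w assume "w \<in> W" "w ` A' = A'" "w ` B' = B'"
      thus "w ` A = A \<and> w ` B = B" using G by blast
    qed
    moreover have "Z A \<inter> Z B \<subseteq> Z A' \<inter> Z B'" by (rule Z_mono[OF cl])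
    ultimately show "Z A \<inter> Z B = Z A' \<inter> Z B'" by (rule equalityI[rotated])
  next
    assume zz: "Z A \<inter> Z B = Z A' \<inter> Z B'"
    show ?G
    proof (intro ballI impI)
      fix w assume w: "w \<in> W" "w ` A' = A' \<and> w ` B' = B'"
      have sub: "Z A' \<inter> Z B' \<subseteq> Z A \<inter> Z B" using zz by (rule equalityD2)
      show "w ` A = A \<and> w ` B = B" by (rule G_from_Z[OF fa sub w(1) conjunct1[OF w(2)] conjunct2[OF w(2)]])
    qed
  qed
  have a1: "anodyne W m n \<longleftrightarrow> Z A \<inter> Z B = Z A' \<inter> Z B'" unfolding m n by (rule anodyne_iff[OF fa cl])
  have a2: "inj_on (proj_xi n) m \<longleftrightarrow> ?G" unfolding m n by (rule proj_inj_iff[OF fa cl])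
  have "anodyne W m n \<longleftrightarrow> inj_on (proj_xi n) m" using a1 a2 G_Z by (simp only:)
  thus ?thesis using c b by (simp only:)
qed

end

theorem proposition1p6:
  fixes W :: "('a::euclidean_space \<Rightarrow> 'a) set"
    and m n :: "('a set \<times> 'a set) set"
  assumes "finite_refl_group W"
    and "m \<in> Xi W" and "n \<in> Xi W"
    and "xi_ge W m n"
  shows "(anodyne W m n \<longleftrightarrow> card m = card n)
    \<and> (card m = card n \<longleftrightarrow> bij_betw (proj_xi n) m n)"
proof -
  interpret frg W using assms(1) by unfold_locales
  obtain A0 B0 where m0: "A0 \<in> faces W" "B0 \<in> faces W" "m = pair_orbit W (A0, B0)"
    using assms(2) unfolding Xi_def by blast
  obtain A0' B0' where n0: "A0' \<in> faces W" "B0' \<in> faces W" "n = pair_orbit W (A0', B0')"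
    using assms(3) unfolding Xi_def by blast
  obtain A B A' B' where ge: "(A, B) \<in> m" "(A', B') \<in> n" "face_le A' A" "face_le B' B"
    using assms(4) unfolding xi_ge_def by blast
  obtain g where g: "g \<in> W" "(A, B) = (g ` A0, g ` B0)" using orb_elem ge(1) m0(3) by blast
  obtain g' where g': "g' \<in> W" "(A', B') = (g' ` A0', g' ` B0')" using orb_elem ge(2) n0(3) by blast
  have fa: "A \<in> faces W" "B \<in> faces W" "A' \<in> faces W" "B' \<in> faces W"
    using g(2) g'(2) faces_W[OF g(1) m0(1)] faces_W[OF g(1) m0(2)] faces_W[OF g'(1) n0(1)] faces_W[OF g'(1) n0(2)]
    by simp_all
  have m: "m = pair_orbit W (A, B)" using orb_shift[OF g(1)] g(2) m0(3) by simp
  have n: "n = pair_orbit W (A', B')" using orb_shift[OF g'(1)] g'(2) n0(3) by simp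
  show ?thesis using main_local[OF fa _ _ m n] ge(3,4) unfolding face_le_def by blast
qed


end
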